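(* Suppose that $(\breve L,W)$ is a complete reflection lattice such that $(\mathbb{Q}\otimes\breve L,W)$ decomposes as a product $(V_1,W_1)\times(\mathbb{Q}\otimes L_\Delta,W_\Delta)$. Then $(\breve L,W)$ decomposes as the product $(\breve L\cap V_1,W_1)\times(L_\Delta,W_\Delta)$ of complete reflection lattices. If $(\breve L,W)$ is marked, then there is a unique way to mark the two factors of the product so that the product decomposition respects the markings.
   Context: A complete lattice is a finitely generated free $\mathbb{Z}_2$-module; a reflection is an automorphism conjugate in $GL(r,\mathbb{Q}_2)$ to $\mathrm{diag}(-1,1,\dots,1)$; a complete reflection lattice is $(\breve L,W)$ with $W\subset\mathrm{Aut}(\breve L)$ finite and generated by its reflections. A product $(A,W)\times(A',W')$ is $(A\times A',W\times W')$ with the evident action; a decomposition of $(\mathbb{Q}\otimes\breve L,W)$ as a product means $\mathbb{Q}\otimes\breve L=V_1\times V_2$, $W=W_1\times W_2$ with $W_k$ acting on $V_k$ and trivially on the other factor. A marking of a reflection $\sigma$ is an equivalence class of pairs $(b,\beta)$ with $b\in\breve L$, $\beta:\breve L\to\mathbb{Z}_2$, $\sigma(x)=x+\beta(x)b$, modulo $(b,\beta)\sim(ub,u^{-1}\beta)$ for units $u$; a marked complete reflection lattice assigns such a marking to each reflection of $W$ compatibly with conjugation by $W$. $(L_\Delta,W_\Delta)$ is the rank $3$ complete reflection lattice associated to the exceptional $2$-compact group $\mathrm{DI}(4)$ (the action of its Weyl group on $\mathrm{Hom}(\mathbb{Z}/2^\infty,\breve T)$, $\breve T$ its maximal $2$-discrete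 torus); $W_\Delta\cong\mathbb{Z}/2\times GL(3,\mathbb{F}_2)$, the central $\mathbb{Z}/2$ acts by $-1$, $W_\Delta$ acts on $L_\Delta/2$ via the natural representation of $GL(3,\mathbb{F}_2)$, and all reflections of $W_\Delta$ are nontrivial mod $2$. *)

theory Defs
  imports "HOL-Analysis.Analysis" "HOL-Library.Z2"
begin

section \<open>The 2-adic integers\<close>

text \<open>A 2-adic integer is a compatible system of residues x_n in [0, 2^n),
  i.e. an element of the inverse limit of the rings Z/2^n.\<close>

typedef z2 = "{f :: nat \<Rightarrow> int. \<forall>n. 0 \<le> f n \<and> f n < 2 ^ n \<and> f (Suc n) mod 2 ^ n = f n}"
  morphisms digits Abs_z2
  by (rule exI[of _ "\<lambda>n. 0"]) simp

setup_lifting type_definition_z2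

lemma z2_mod_Suc: "(x :: int) mod 2 ^ Suc n mod 2 ^ n = x mod 2 ^ n"
  by (simp add: mod_mod_cancel)

lemma z2_mod_Suc': "(x :: int) mod (2 * 2 ^ n) mod 2 ^ n = x mod 2 ^ n"
  using z2_mod_Suc[of x n] by simp

declare z2_mod_Suc'[simp]

instantiation z2 :: comm_ring_1
begin

lift_definition zero_z2 :: z2 is "\<lambda>n. 0" by simp

lift_definition one_z2 :: z2 is "\<lambda>n. 1 mod 2 ^ n"
  by (simp add: z2_mod_Suc)

definition z2_ok :: "(nat \<Rightarrow> int) \<Rightarrow> bool" where
  "z2_ok f \<longleftrightarrow> (\<forall>n. 0 \<le> f n \<and> f n < 2 ^ n \<and> f (Suc n) mod 2 ^ n = f n)"

lemma z2_ok_add: "z2_ok f \<Longrightarrow> z2_ok g \<Longrightarrow> z2_ok (\<lambda>n. (f n + g n) mod 2 ^ n)"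
  unfolding z2_ok_def
  by (auto simp del: power_Suc simp add: z2_mod_Suc) (metis mod_add_eq)

lemma z2_ok_mult: "z2_ok f \<Longrightarrow> z2_ok g \<Longrightarrow> z2_ok (\<lambda>n. (f n * g n) mod 2 ^ n)"
  unfolding z2_ok_def
  by (auto simp del: power_Suc simp add: z2_mod_Suc) (metis mod_mult_eq)

lemma z2_ok_minus: "z2_ok f \<Longrightarrow> z2_ok (\<lambda>n. (- f n) mod 2 ^ n)"
  unfolding z2_ok_def
  by (auto simp del: power_Suc simp add: z2_mod_Suc) (metis mod_minus_eq)

lift_definition plus_z2 :: "z2 \<Rightarrow> z2 \<Rightarrow> z2" is "\<lambda>f g n. (f n + g n) mod 2 ^ n"
  using z2_ok_add unfolding z2_ok_def by blast

lift_definition times_z2 :: "z2 \<Rightarrow> z2 \<Rightarrow> z2" is "\<lambda>f g n. (f n * g n) mod 2 ^ n"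
  using z2_ok_mult unfolding z2_ok_def by blast

lift_definition uminus_z2 :: "z2 \<Rightarrow> z2" is "\<lambda>f n. (- f n) mod 2 ^ n"
  using z2_ok_minus unfolding z2_ok_def by blast

definition minus_z2 :: "z2 \<Rightarrow> z2 \<Rightarrow> z2" where "minus_z2 a b = a + (- b)"

lemma z2_eqI: "(\<And>n. digits a n = digits b n) \<Longrightarrow> a = b"
  by (metis digits_inject ext)

lemma z2_digits_mod: "digits a n mod 2 ^ n = digits a n"
  using digits[of a] by simp

instance
proof
  fix a b c :: z2
  show "a + b + c = a + (b + c)"
    by (rule z2_eqI, transfer) (simp add: mod_simps ac_simps)
  show "a + b = b + a"
    by (rule z2_eqI, transfer) (simp add: ac_simps)
  show "0 + a = a"
    by (rule z2_eqI, transfer) simp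
  show "- a + a = 0"
    by (rule z2_eqI, transfer) (simp add: mod_simps)
  show "a - b = a + - b" by (simp add: minus_z2_def)
  show "a * b * c = a * (b * c)"
    by (rule z2_eqI, transfer) (simp add: mod_simps ac_simps)
  show "a * b = b * a"
    by (rule z2_eqI, transfer) (simp add: ac_simps)
  show "1 * a = a"
  proof (rule z2_eqI)
    fix n show "digits (1 * a) n = digits a n"
    proof (cases n)
      case 0
      have "0 \<le> digits a 0" "digits a 0 < 1" using spec[OF digits[of a, simplified], of 0] by auto
      then show ?thesis using 0 by (simp add: times_z2.rep_eq one_z2.rep_eq)
    next
      case (Suc m)
      then show ?thesis using digits[of a] by (auto simp add: times_z2.rep_eq one_z2.rep_eq)
    qed
  qed
  show "(a + b) * c = a * c + b * c"
    by (rule z2_eqI, transfer) (simp add: mod_simps algebra_simps)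
  show "(0::z2) \<noteq> 1"
  proof
    assume "(0::z2) = 1"
    then have "digits (0::z2) 1 = digits (1::z2) 1" by simp
    then show False by (simp add: zero_z2.rep_eq one_z2.rep_eq)
  qed
qed

end

definition z2_unit :: "z2 \<Rightarrow> bool" where
  "z2_unit u \<longleftrightarrow> (\<exists>v. u * v = 1)"

section \<open>Complete lattices, reflections, complete reflection lattices\<close>

text \<open>A complete lattice of rank r is identified with z2^'n, CARD('n) = r
  (every finitely generated free Z_2-module is isomorphic to such).
  Automorphisms are the matrices with unit determinant.\<close>

definition lat_aut :: "z2^'n^'n \<Rightarrow> bool" where
  "lat_aut A \<longleftrightarrow> z2_unit (det A)"

definition diag_refl :: "'n::finite \<Rightarrow> z2^'n^'n" where
  "diag_refl i0 = (\<chi> i j. if i = j then (if i = i0 then - 1 else 1) else 0)"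

text \<open>Reflection: an automorphism conjugate in GL(r,Q_2) to diag(-1,1,...,1).
  A matrix P in GL(r,Q_2) may be scaled by a power of 2 to have entries in Z_2;
  invertibility over Q_2 = Frac(Z_2) is then det P \<noteq> 0.\<close>

definition is_reflection :: "z2^'n^'n \<Rightarrow> bool" where
  "is_reflection \<sigma> \<longleftrightarrow> lat_aut \<sigma> \<and>
     (\<exists>(P :: z2^'n^'n) i0. det P \<noteq> 0 \<and> P ** \<sigma> = diag_refl i0 ** P)"

text \<open>Submonoid generated by a set of matrices (for a finite group of invertible
  matrices this is the subgroup generated).\<close>

inductive_set mgen :: "('a::semiring_1^'n^'n) set \<Rightarrow> ('a^'n^'n) set" for S where
  mgen_one: "mat 1 \<in> mgen S"
| mgen_mult: "a \<in> S \<Longrightarrow> b \<in> mgen S \<Longrightarrow> a ** b \<in> mgen S"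

definition is_crl :: "(z2^'n^'n) set \<Rightarrow> bool" where
  "is_crl W \<longleftrightarrow> finite W \<and> mat 1 \<in> W \<and> (\<forall>a\<in>W. \<forall>b\<in>W. a ** b \<in> W) \<and>
     (\<forall>a\<in>W. lat_aut a) \<and> W = mgen {\<sigma>\<in>W. is_reflection \<sigma>}"

section \<open>Submodules\<close>

definition z2_submodule :: "(z2^'n) set \<Rightarrow> bool" where
  "z2_submodule S \<longleftrightarrow> 0 \<in> S \<and> (\<forall>x\<in>S. \<forall>y\<in>S. x + y \<in> S) \<and> (\<forall>c. \<forall>x\<in>S. c *s x \<in> S)"

text \<open>Saturated submodules S of L correspond bijectively to Q_2-subspaces V of
  Q \<otimes> L, via S = L \<inter> V and V = Q S.\<close>

definition saturated :: "(z2^'n) set \<Rightarrow> bool" where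
  "saturated S \<longleftrightarrow> z2_submodule S \<and> (\<forall>c x. c \<noteq> 0 \<and> c *s x \<in> S \<longrightarrow> x \<in> S)"

section \<open>Reduction mod 2 and the DI(4) lattice\<close>

definition z2_red :: "z2 \<Rightarrow> bit" where
  "z2_red x = (if digits x 1 = 0 then 0 else 1)"

definition mat_red :: "z2^'n^'m \<Rightarrow> bit^'n^'m" where
  "mat_red A = (\<chi> i j. z2_red (A $ i $ j))"

text \<open>The properties of (L_Delta, W_Delta) listed in the context: a rank 3 complete
  reflection lattice with W_Delta = {1,-1} x H, H mapped isomorphically onto
  GL(3,F_2) by reduction mod 2 (i.e. W_Delta acts on L_Delta/2 via the natural
  representation), and all reflections nontrivial mod 2.\<close>

definition DI4_like :: "(z2^3^3) set \<Rightarrow> bool" where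
  "DI4_like W \<longleftrightarrow> is_crl W \<and>
     mat_red ` W = {M :: bit^3^3. det M \<noteq> 0} \<and>
     {A\<in>W. mat_red A = mat 1} = {mat 1, - mat 1} \<and>
     (\<exists>H\<subseteq>W. mat 1 \<in> H \<and> (\<forall>a\<in>H. \<forall>b\<in>H. a ** b \<in> H) \<and> inj_on mat_red H \<and>
        mat_red ` H = {M :: bit^3^3. det M \<noteq> 0}) \<and>
     (\<forall>\<sigma>\<in>W. is_reflection \<sigma> \<longrightarrow> mat_red \<sigma> \<noteq> mat 1)"

section \<open>Product decompositions\<close>

text \<open>(Q \<otimes> L, W) = (V1,W1) x (V2,W2), with S_k = L \<inter> V_k.\<close>

definition rat_decomp ::
  "(z2^'n^'n) set \<Rightarrow> (z2^'n) set \<Rightarrow> (z2^'n) set \<Rightarrow> (z2^'n^'n) set \<Rightarrow> (z2^'n^'n) set \<Rightarrow> bool" where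
  "rat_decomp W S1 S2 W1 W2 \<longleftrightarrow>
     saturated S1 \<and> saturated S2 \<and> S1 \<inter> S2 = {0} \<and>
     (\<forall>x. \<exists>c. c \<noteq> 0 \<and> (\<exists>a\<in>S1. \<exists>b\<in>S2. c *s x = a + b)) \<and>
     W1 \<subseteq> W \<and> W2 \<subseteq> W \<and> mat 1 \<in> W1 \<and> mat 1 \<in> W2 \<and>
     (\<forall>a\<in>W1. \<forall>b\<in>W1. a ** b \<in> W1) \<and> (\<forall>a\<in>W2. \<forall>b\<in>W2. a ** b \<in> W2) \<and>
     W = {a ** b | a b. a \<in> W1 \<and> b \<in> W2} \<and> W1 \<inter> W2 = {mat 1} \<and>
     (\<forall>a\<in>W1. \<forall>b\<in>W2. a ** b = b ** a) \<and>
     (\<forall>w\<in>W1. (\<forall>x\<in>S1. w *v x \<in> S1) \<and> (\<forall>x\<in>S2. w *v x = x)) \<and>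
     (\<forall>w\<in>W2. (\<forall>x\<in>S2. w *v x \<in> S2) \<and> (\<forall>x\<in>S1. w *v x = x))"

text \<open>(V2,W2) is isomorphic to (Q \<otimes> L_Delta, W_Delta): a Q_2-linear isomorphism,
  rescaled by a power of 2 so that it maps L_Delta into L \<inter> V2, intertwining a group
  isomorphism W_Delta \<rightarrow> W2.\<close>

definition rat_iso ::
  "(z2^3^3) set \<Rightarrow> (z2^'n) set \<Rightarrow> (z2^'n^'n) set \<Rightarrow> bool" where
  "rat_iso WD S2 W2 \<longleftrightarrow>
     (\<exists>(F :: z2^3^'n) \<psi>. inj ((*v) F) \<and> range ((*v) F) \<subseteq> S2 \<and>
        (\<forall>x\<in>S2. \<exists>c. c \<noteq> 0 \<and> c *s x \<in> range ((*v) F)) \<and>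
        bij_betw \<psi> WD W2 \<and> (\<forall>a\<in>WD. \<forall>b\<in>WD. \<psi> (a ** b) = \<psi> a ** \<psi> b) \<and>
        (\<forall>u\<in>WD. \<psi> u ** F = F ** u))"

section \<open>Markings\<close>

definition lin_on :: "(z2^'n) set \<Rightarrow> (z2^'n \<Rightarrow> z2) \<Rightarrow> bool" where
  "lin_on S \<beta> \<longleftrightarrow> (\<forall>x\<in>S. \<forall>y\<in>S. \<beta> (x + y) = \<beta> x + \<beta> y) \<and> (\<forall>c. \<forall>x\<in>S. \<beta> (c *s x) = c * \<beta> x)"

text \<open>(b, beta) is a marking pair of sigma on the lattice S.\<close>

definition is_marking_on :: "(z2^'n) set \<Rightarrow> z2^'n^'n \<Rightarrow> z2^'n \<Rightarrow> (z2^'n \<Rightarrow> z2) \<Rightarrow> bool" where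
  "is_marking_on S \<sigma> b \<beta> \<longleftrightarrow> b \<in> S \<and> lin_on S \<beta> \<and> (\<forall>x\<in>S. \<sigma> *v x = x + \<beta> x *s b)"

text \<open>(b,beta) ~ (u b, u^-1 beta) for units u (functionals compared on S).\<close>

definition mark_eq_on :: "(z2^'n) set \<Rightarrow> ((z2^'n) \<times> (z2^'n \<Rightarrow> z2)) \<Rightarrow> ((z2^'n) \<times> (z2^'n \<Rightarrow> z2)) \<Rightarrow> bool" where
  "mark_eq_on S p q \<longleftrightarrow> (\<exists>u. z2_unit u \<and> fst q = u *s fst p \<and> (\<forall>x\<in>S. snd p x = u * snd q x))"

text \<open>m assigns a marking (via a representative) to each reflection in W, compatibly
  with conjugation: m(w sigma w^-1) ~ (w b, beta o w^-1) where (b,beta) = m sigma.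
  The condition sigma' ** w = w ** sigma says sigma' = w sigma w^-1.\<close>

definition marked_on :: "(z2^'n) set \<Rightarrow> (z2^'n^'n) set \<Rightarrow> (z2^'n^'n \<Rightarrow> (z2^'n) \<times> (z2^'n \<Rightarrow> z2)) \<Rightarrow> bool" where
  "marked_on S W m \<longleftrightarrow>
     (\<forall>\<sigma>\<in>W. is_reflection \<sigma> \<longrightarrow> is_marking_on S \<sigma> (fst (m \<sigma>)) (snd (m \<sigma>))) \<and>
     (\<forall>w\<in>W. \<forall>\<sigma>\<in>W. \<forall>\<sigma>'\<in>W. is_reflection \<sigma> \<and> \<sigma>' ** w = w ** \<sigma> \<longrightarrow>
        (\<exists>u. z2_unit u \<and> fst (m \<sigma>') = u *s (w *v fst (m \<sigma>)) \<and>
             (\<forall>x\<in>S. snd (m \<sigma>) x = u * snd (m \<sigma>') (w *v x))))"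

text \<open>Projection of L = S1 + S2 onto S1.\<close>

definition lat_proj1 :: "(z2^'n) set \<Rightarrow> (z2^'n) set \<Rightarrow> z2^'n \<Rightarrow> z2^'n" where
  "lat_proj1 S1 S2 x = (THE a. a \<in> S1 \<and> x - a \<in> S2)"

text \<open>The decomposition L = S1 x L_Delta (via a \<mapsto> a, y \<mapsto> G y; W1 x W_Delta \<rightarrow> W via
  (w1,u) \<mapsto> w1 ** psi u) marks_respected the markings m1 of (S1,W1), m2 of (L_Delta,W_Delta)
  and m of (L,W): the product marking of (sigma,1) is (b, beta o pr1), that of
  (1,tau) is (G b', beta' o G^-1 o pr2).\<close>

definition marks_respected ::
  "(z2^'n) set \<Rightarrow> (z2^'n) set \<Rightarrow> z2^3^'n \<Rightarrow> (z2^3^3 \<Rightarrow> z2^'n^'n) \<Rightarrow> (z2^'n^'n) set \<Rightarrow> (z2^3^3) set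
   \<Rightarrow> (z2^'n^'n \<Rightarrow> (z2^'n) \<times> (z2^'n \<Rightarrow> z2)) \<Rightarrow> (z2^'n^'n \<Rightarrow> (z2^'n) \<times> (z2^'n \<Rightarrow> z2))
   \<Rightarrow> (z2^3^3 \<Rightarrow> (z2^3) \<times> (z2^3 \<Rightarrow> z2)) \<Rightarrow> bool" where
  "marks_respected S1 S2 G \<psi> W1 WD m m1 m2 \<longleftrightarrow>
     (\<forall>\<sigma>\<in>W1. is_reflection \<sigma> \<longrightarrow>
        mark_eq_on UNIV (fst (m1 \<sigma>), (\<lambda>x. snd (m1 \<sigma>) (lat_proj1 S1 S2 x))) (m \<sigma>)) \<and>
     (\<forall>\<tau>\<in>WD. is_reflection \<tau> \<longrightarrow>
        mark_eq_on UNIV (G *v fst (m2 \<tau>), (\<lambda>x. snd (m2 \<tau>) (THE y. G *v y = x - lat_proj1 S1 S2 x))) (m (\<psi> \<tau>)))"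

end

theory Submission
  imports Defs "HOL-Number_Theory.Cong"
begin

lemma dig_prop: "0 \<le> digits a n \<and> digits a n < 2 ^ n \<and> digits a (Suc n) mod 2 ^ n = digits a n"
  using digits[of a] by auto

lemma dig_mod_le: "m \<le> n \<Longrightarrow> digits a n mod 2 ^ m = digits a m"
proof (induction n)
  case 0 then show ?case using dig_prop[of a 0] by simp
next
  case (Suc n)
  show ?case
  proof (cases "m = Suc n")
    case True then show ?thesis using dig_prop[of a "Suc n"] by simp
  next
    case False
    then have "m \<le> n" using Suc by simp
    have "digits a (Suc n) mod 2 ^ m = digits a (Suc n) mod 2 ^ n mod 2 ^ m"
      using \<open>m \<le> n\<close> by (simp add: mod_mod_cancel le_imp_power_dvd)
    then show ?thesis using Suc.IH[OF \<open>m \<le> n\<close>] dig_prop[of a n] by simp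
  qed
qed

lemma dig_add: "digits (a + b) n = (digits a n + digits b n) mod 2 ^ n"
  by (simp add: plus_z2.rep_eq)
lemma dig_mult: "digits (a * b) n = (digits a n * digits b n) mod 2 ^ n"
  by (simp add: times_z2.rep_eq)
lemma dig_uminus: "digits (- a) n = (- digits a n) mod 2 ^ n"
  by (simp add: uminus_z2.rep_eq)
lemma dig_zero: "digits 0 n = 0"
  by (simp add: zero_z2.rep_eq)
lemma dig_one: "digits 1 n = 1 mod 2 ^ n"
  by (simp add: one_z2.rep_eq)

lemma dig_of_nat: "digits (of_nat k) n = int k mod 2 ^ n"
proof (induction k)
  case 0 then show ?case by (simp add: dig_zero)
next
  case (Suc k)
  have "digits (of_nat (Suc k)) n = digits (1 + of_nat k) n" by simp
  also have "\<dots> = (1 mod 2 ^ n + int k mod 2 ^ n) mod 2 ^ n" by (simp only: dig_add dig_one Suc.IH)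
  also have "\<dots> = (1 + int k) mod 2 ^ n" by (rule mod_add_eq)
  also have "\<dots> = int (Suc k) mod 2 ^ n" by simp
  finally show ?case .
qed

lemma dig_pow2: "digits ((2::z2) ^ n) n = 0"
proof -
  have "(2::z2) ^ n = of_nat (2 ^ n)" by simp
  moreover have "digits (of_nat (2 ^ n) :: z2) n = 0" by (simp only: dig_of_nat) simp
  ultimately show ?thesis by simp
qed

lemma dig_range1: "digits a 1 = 0 \<or> digits a 1 = 1"
  using dig_prop[of a 1] by auto

lemma dig_0: "digits a 0 = 0"
  using dig_prop[of a 0] by auto

lemma dig_two: "digits (2::z2) m = 2 mod 2 ^ m"
  using dig_of_nat[of 2 m] by simp

lemma two_cancel: assumes "2 * b = (0::z2)" shows "b = 0"
proof (rule z2_eqI)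
  fix n
  have "digits (2 * b) (Suc n) = 0" using assms by (simp add: dig_zero)
  then have "(2 * digits b (Suc n)) mod 2 ^ Suc n = 0"
    by (simp only: dig_mult dig_two mod_mult_left_eq)
  then have "2 ^ Suc n dvd 2 * digits b (Suc n)" by presburger
  then have "2 ^ n dvd digits b (Suc n)" by simp
  then have "digits b (Suc n) mod 2 ^ n = 0" by simp
  then show "digits b n = digits 0 n" using dig_prop[of b n] by (simp add: dig_zero)
qed

lemma half_exists: assumes "digits a 1 = 0" shows "\<exists>b. a = 2 * b"
proof -
  define f where "f n = digits a (Suc n) div 2" for n
  have ev: "even (digits a (Suc n))" for n
    using dig_mod_le[of 1 "Suc n" a] assms by (simp add: even_iff_mod_2_eq_zero)
  have ok: "f \<in> {f. \<forall>n. 0 \<le> f n \<and> f n < 2 ^ n \<and> f (Suc n) mod 2 ^ n = f n}"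
  proof (clarsimp, intro conjI)
    fix n
    obtain y where y: "digits a (Suc n) = 2 * y" using ev by blast
    show "0 \<le> f n" using dig_prop[of a "Suc n"] by (simp add: f_def y)
    show "f n < 2 ^ n" using dig_prop[of a "Suc n"] by (simp add: f_def y)
    have "digits a (Suc (Suc n)) mod 2 ^ Suc n = digits a (Suc n)" using dig_prop by blast
    moreover obtain x where x: "digits a (Suc (Suc n)) = 2 * x" using ev by blast
    moreover obtain y where y: "digits a (Suc n) = 2 * y" using ev by blast
    ultimately have "(2 * x) mod (2 * 2 ^ n) = 2 * y" by simp
    then have "2 * (x mod 2 ^ n) = 2 * y" by (simp only: mult_mod_right)
    then have "x mod 2 ^ n = y" by simp
    then show "f (Suc n) mod 2 ^ n = f n" by (simp add: f_def x y)
  qed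
  show ?thesis
  proof (intro exI z2_eqI)
    fix n
    have e: "2 * f n = digits a (Suc n)" using ev[of n] by (simp add: f_def)
    have "digits (2 * Abs_z2 f) n = (2 * f n) mod 2 ^ n"
      using Abs_z2_inverse[OF ok] by (simp only: dig_mult dig_two mod_mult_left_eq)
    also have "\<dots> = digits a n" using e dig_prop[of a n] by simp
    finally show "digits a n = digits (2 * Abs_z2 f) n" by simp
  qed
qed

lemma inv_uniq:
  fixes d x y M :: int
  assumes "0 \<le> x" "x < M" "0 \<le> y" "y < M" "(d * x) mod M = 1 mod M" "(d * y) mod M = 1 mod M"
  shows "x = y"
proof -
  have c1: "[d * x = 1] (mod M)" "[d * y = 1] (mod M)" using assms by (auto simp: cong_def)
  have "[x * (d * y) = x * 1] (mod M)" using c1(2) by (rule cong_mult[OF cong_refl])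
  moreover have "[y * (d * x) = y * 1] (mod M)" using c1(1) by (rule cong_mult[OF cong_refl])
  moreover have "x * (d * y) = y * (d * x)" by (simp add: ac_simps)
  ultimately have "[x = y] (mod M)" by (metis cong_sym cong_trans mult_1_right)
  then show ?thesis using assms by (simp add: cong_def)
qed

lemma odd_unit: assumes "digits a 1 = 1" shows "z2_unit a"
proof -
  have inv: "\<exists>v. 0 \<le> v \<and> v < 2 ^ n \<and> (digits a n * v) mod 2 ^ n = 1 mod 2 ^ n" for n
  proof (cases n)
    case 0 then show ?thesis by (intro exI[of _ 0]) simp
  next
    case (Suc m)
    have "digits a n mod 2 = 1" using dig_mod_le[of 1 n a] assms Suc by simp
    then have "coprime (digits a n) 2" by (simp add: odd_iff_mod_2_eq_one)
    then have "coprime (digits a n) (2 ^ n)" using Suc by simp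
    then obtain x where "[digits a n * x = 1] (mod 2 ^ n)" using cong_solve_coprime_int by blast
    then have "(digits a n * (x mod 2 ^ n)) mod 2 ^ n = 1 mod 2 ^ n"
      by (simp add: cong_def mod_mult_right_eq)
    then show ?thesis by (intro exI[of _ "x mod 2 ^ n"]) simp
  qed
  define v where "v n = (SOME v. 0 \<le> v \<and> v < 2 ^ n \<and> (digits a n * v) mod 2 ^ n = 1 mod 2 ^ n)" for n
  have vp: "0 \<le> v n \<and> v n < 2 ^ n \<and> (digits a n * v n) mod 2 ^ n = 1 mod 2 ^ n" for n
    unfolding v_def using someI_ex[OF inv[of n]] .
  have compat: "v (Suc n) mod 2 ^ n = v n" for n
  proof (rule inv_uniq[of _ "2 ^ n" _ "digits a n"])
    show "0 \<le> v (Suc n) mod 2 ^ n" "v (Suc n) mod 2 ^ n < 2 ^ n" by simp_all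
    show "0 \<le> v n" "v n < 2 ^ n" "(digits a n * v n) mod 2 ^ n = 1 mod 2 ^ n" using vp by auto
    have dv: "(2::int) ^ n dvd 2 ^ Suc n" by simp
    have "(digits a n * (v (Suc n) mod 2 ^ n)) mod 2 ^ n = (digits a n * v (Suc n)) mod 2 ^ n"
      by (simp add: mod_mult_right_eq)
    also have "\<dots> = ((digits a (Suc n) mod 2 ^ n) * v (Suc n)) mod 2 ^ n"
      using dig_prop[of a n] by simp
    also have "\<dots> = (digits a (Suc n) * v (Suc n)) mod 2 ^ n"
      by (simp add: mod_mult_left_eq)
    also have "\<dots> = ((digits a (Suc n) * v (Suc n)) mod 2 ^ Suc n) mod 2 ^ n"
      by (simp only: mod_mod_cancel[OF dv])
    also have "\<dots> = (1 mod 2 ^ Suc n) mod 2 ^ n" using vp[of "Suc n"] by simp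
    also have "\<dots> = 1 mod 2 ^ n" by (simp only: mod_mod_cancel[OF dv])
    finally show "(digits a n * (v (Suc n) mod 2 ^ n)) mod 2 ^ n = 1 mod 2 ^ n" .
  qed
  have ok: "v \<in> {f. \<forall>n. 0 \<le> f n \<and> f n < 2 ^ n \<and> f (Suc n) mod 2 ^ n = f n}"
    using vp compat by auto
  have "a * Abs_z2 v = 1"
  proof (rule z2_eqI)
    fix n
    show "digits (a * Abs_z2 v) n = digits 1 n"
      using Abs_z2_inverse[OF ok] vp[of n] by (simp only: dig_mult dig_one)
  qed
  then show ?thesis unfolding z2_unit_def by blast
qed

lemma unit_odd: assumes "z2_unit a" shows "digits a 1 = 1"
proof -
  obtain b where "a * b = 1" using assms unfolding z2_unit_def by blast
  then have "digits (a * b) 1 = 1" by (simp add: dig_one)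
  then have "(digits a 1 * digits b 1) mod 2 = 1" by (simp add: dig_mult)
  then show ?thesis using dig_range1[of a] by auto
qed

lemma unit_iff_odd: "z2_unit a \<longleftrightarrow> digits a 1 = 1"
  using odd_unit unit_odd by blast

lemma two_pow_cancel: "(2::z2) ^ s * b = 0 \<Longrightarrow> b = 0"
  by (induction s arbitrary: b) (auto simp: mult.assoc dest: two_cancel)

lemma val_decomp_aux: "digits a N \<noteq> 0 \<Longrightarrow> \<exists>s u. z2_unit u \<and> a = 2 ^ s * u"
proof (induction N arbitrary: a)
  case 0 then show ?case by (simp add: dig_0)
next
  case (Suc N)
  show ?case
  proof (cases "digits a 1 = 1")
    case True then show ?thesis using odd_unit by (intro exI[of _ 0] exI[of _ a]) auto
  next
    case False
    then have "digits a 1 = 0" using dig_range1 by blast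
    then obtain b where b: "a = 2 * b" using half_exists by blast
    have "digits b N \<noteq> 0"
    proof
      assume h: "digits b N = 0"
      have "digits b (Suc N) mod 2 ^ N = 0" using h dig_prop[of b N] by simp
      then obtain q where q: "digits b (Suc N) = 2 ^ N * q" by (meson mod_0_imp_dvd dvdE)
      have "digits a (Suc N) = (2 mod 2 ^ Suc N * digits b (Suc N)) mod 2 ^ Suc N"
        using b by (simp only: dig_mult dig_two)
      also have "\<dots> = (2 * digits b (Suc N)) mod 2 ^ Suc N" by (simp only: mod_mult_left_eq)
      also have "\<dots> = 0" using q by simp
      finally show False using Suc.prems by simp
    qed
    then obtain s u where "z2_unit u" "b = 2 ^ s * u" using Suc.IH by blast
    then show ?thesis using b by (intro exI[of _ "Suc s"] exI[of _ u]) (simp add: mult.assoc)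
  qed
qed

lemma val_decomp: "a \<noteq> 0 \<Longrightarrow> \<exists>s u. z2_unit u \<and> a = 2 ^ s * (u::z2)"
proof -
  assume "a \<noteq> 0"
  then obtain N where "digits a N \<noteq> digits 0 N" using z2_eqI by blast
  then show ?thesis using val_decomp_aux[of a N] by (simp add: dig_zero)
qed

instance z2 :: idom
proof
  fix a b :: z2
  assume "a \<noteq> 0" "b \<noteq> 0"
  then obtain s u where u: "z2_unit u" "a = 2 ^ s * u" using val_decomp by blast
  obtain u' where u': "u * u' = 1" using u unfolding z2_unit_def by blast
  show "a * b \<noteq> 0"
  proof
    assume "a * b = 0"
    then have "2 ^ s * (u * b) = 0" using u by (simp add: mult.assoc)
    then have "u * b = 0" by (rule two_pow_cancel)
    then have "u' * (u * b) = 0" by simp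
    moreover have "b = u' * (u * b)"
    proof -
      have "u' * u = 1" using u' by (simp add: mult.commute)
      then have "b = (u' * u) * b" by simp
      then show ?thesis by (simp only: mult.assoc)
    qed
    ultimately have "b = 0" by simp
    then show False using \<open>b \<noteq> 0\<close> by simp
  qed
qed

lemma z2_two_nz: "(2::z2) \<noteq> 0"
proof
  assume "(2::z2) = 0"
  then have "digits (2::z2) 2 = digits 0 2" by simp
  then show False by (simp add: dig_two dig_zero)
qed

lemma red_cases: "z2_red a = 0 \<longleftrightarrow> digits a 1 = 0" "z2_red a = 1 \<longleftrightarrow> digits a 1 = 1"
  using dig_range1[of a] by (auto simp: z2_red_def)

lemma red_add: "z2_red (a + b) = z2_red a + z2_red b"
  using dig_range1[of a] dig_range1[of b]
  by (auto simp: z2_red_def dig_add)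

lemma red_mult: "z2_red (a * b) = z2_red a * z2_red b"
  using dig_range1[of a] dig_range1[of b]
  by (auto simp: z2_red_def dig_mult)

lemma red_zero [simp]: "z2_red 0 = 0" by (simp add: z2_red_def dig_zero)
lemma red_one [simp]: "z2_red 1 = 1" by (simp add: z2_red_def dig_one)
lemma red_two [simp]: "z2_red 2 = 0" by (simp add: z2_red_def dig_two)

lemma red_uminus: "z2_red (- a) = z2_red a"
  using dig_range1[of a] by (auto simp: z2_red_def dig_uminus)

lemma red_diff: "z2_red (a - b) = z2_red a + z2_red b"
  using red_add[of a "- b"] red_uminus[of b] by simp

lemma red_sum: "z2_red (sum f A) = sum (\<lambda>x. z2_red (f x)) A"
  by (induction A rule: infinite_finite_induct) (auto simp: red_add)

lemma red_unit: "z2_unit u \<Longrightarrow> z2_red u = 1"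
  using unit_iff_odd red_cases by blast

lemma red_zero_half: "z2_red a = 0 \<Longrightarrow> \<exists>b. a = 2 * b"
  using half_exists red_cases by blast

definition vred :: "z2^'n \<Rightarrow> bit^'n" where
  "vred x = (\<chi> i. z2_red (x $ i))"

lemma mat_red_mult: "mat_red (A ** B) = mat_red A ** mat_red B"
  by (simp add: mat_red_def matrix_matrix_mult_def vec_eq_iff red_sum red_mult)

lemma vred_mult: "vred (A *v x) = mat_red A *v vred x"
  by (simp add: mat_red_def vred_def matrix_vector_mult_def vec_eq_iff red_sum red_mult)

lemma vred_add: "vred (x + y) = vred x + vred y"
  by (simp add: vred_def vec_eq_iff red_add)

lemma vred_scale2: "vred (2 *s x) = 0"
  by (simp add: vred_def vec_eq_iff red_mult)

lemma vred_zero_half: "vred y = 0 \<Longrightarrow> \<exists>y'. y = 2 *s y'"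
proof -
  assume "vred y = 0"
  then have "\<forall>i. \<exists>b. y $ i = 2 * b" using red_zero_half by (simp add: vred_def vec_eq_iff)
  then obtain h where "\<forall>i. y $ i = 2 * h i" by metis
  then show ?thesis by (intro exI[of _ "\<chi> i. h i"]) (simp add: vec_eq_iff)
qed

lemma mat_red_one: "mat_red (mat 1) = mat 1"
  by (simp add: mat_red_def mat_def vec_eq_iff)

(* generic vector facts over z2 *)

lemma vec_scale_cancel: "(c::z2) \<noteq> 0 \<Longrightarrow> c *s x = c *s y \<Longrightarrow> x = y"
  by (simp add: vec_eq_iff)

lemma vec_scale_zero: "(c::z2) *s x = 0 \<Longrightarrow> c = 0 \<or> x = 0"
  by (auto simp: vec_eq_iff)

lemma mv_scale: "A *v (c *s x) = (c::'a::comm_semiring_1) *s (A *v x)"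
  by (simp add: matrix_vector_mult_def vec_eq_iff sum_distrib_left ac_simps)

lemma mv_add: "A *v (x + y) = A *v x + A *v (y::'a::comm_semiring_1^'n)"
  by (simp add: matrix_vector_mult_def vec_eq_iff sum.distrib algebra_simps)

lemma mv_diff: "A *v (x - y) = A *v x - A *v (y::'a::comm_ring_1^'n)"
  by (simp add: matrix_vector_mult_def vec_eq_iff sum_subtractf algebra_simps)

lemma mv_neg: "A *v (- y) = - (A *v (y::'a::comm_ring_1^'n))"
  by (simp add: matrix_vector_mult_def vec_eq_iff sum_negf)

lemma mat_scale_eq_cancel:
  fixes A B :: "z2^'m^'n"
  assumes "c \<noteq> 0" "(\<chi> i j. c * A $ i $ j) = (\<chi> i j. c * B $ i $ j)"
  shows "A = B"
  using assms by (simp add: vec_eq_iff)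

definition GM1 :: "bit^3^3" where "GM1 = (\<chi> i j. if i = j then 1 else if i = 1 \<and> j = 2 then 1 else 0)"
definition GM2 :: "bit^3^3" where "GM2 = (\<chi> i j. if i = j then 1 else if i = 2 \<and> j = 3 then 1 else 0)"
definition GM3 :: "bit^3^3" where "GM3 = (\<chi> i j. if i = j then 1 else if i = 3 \<and> j = 1 then 1 else 0)"

lemma GM_det: "det GM1 \<noteq> 0" "det GM2 \<noteq> 0" "det GM3 \<noteq> 0"
  by (simp_all add: det_3 GM1_def GM2_def GM3_def)


lemma GM_mv:
  "GM1 *v v = (\<chi> i. if i = 1 then v$1 + v$2 else v$i)"
  "GM2 *v v = (\<chi> i. if i = 2 then v$2 + v$3 else v$i)"
  "GM3 *v v = (\<chi> i. if i = 3 then v$3 + v$1 else v$i)"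
  by (simp_all add: GM1_def GM2_def GM3_def matrix_vector_mult_def vec_eq_iff sum_3 forall_3)

lemma GM_fix: "GM1 *v v = v \<Longrightarrow> GM2 *v v = v \<Longrightarrow> GM3 *v v = (v::bit^3) \<Longrightarrow> v = 0"
  unfolding GM_mv vec_eq_iff forall_3
  by (cases "v$1"; cases "v$2"; cases "v$3") simp_all

lemma GM_span:
  fixes K :: "(bit^3) set"
  assumes add: "\<And>x y. x \<in> K \<Longrightarrow> y \<in> K \<Longrightarrow> x + y \<in> K"
    and m1: "\<And>x. x \<in> K \<Longrightarrow> GM1 *v x \<in> K"
    and m2: "\<And>x. x \<in> K \<Longrightarrow> GM2 *v x \<in> K"
    and m3: "\<And>x. x \<in> K \<Longrightarrow> GM3 *v x \<in> K"
    and v: "v \<in> K" "v \<noteq> 0"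
  shows "w \<in> K"
proof -
  define e1 :: "bit^3" where "e1 = (\<chi> i. if i = 1 then 1 else 0)"
  define e2 :: "bit^3" where "e2 = (\<chi> i. if i = 2 then 1 else 0)"
  define e3 :: "bit^3" where "e3 = (\<chi> i. if i = 3 then 1 else 0)"
  have d1: "x \<in> K \<Longrightarrow> (\<chi> i. if i = 1 then x$2 else 0) \<in> K" for x
  proof -
    assume "x \<in> K"
    then have "GM1 *v x + x \<in> K" using add m1 by blast
    moreover have "GM1 *v x + x = (\<chi> i. if i = 1 then x$2 else 0)"
      unfolding GM_mv vec_eq_iff forall_3
      by (cases "x$1"; cases "x$2"; cases "x$3") simp_all
    ultimately show ?thesis by simp
  qed
  have d2: "x \<in> K \<Longrightarrow> (\<chi> i. if i = 2 then x$3 else 0) \<in> K" for x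
  proof -
    assume "x \<in> K"
    then have "GM2 *v x + x \<in> K" using add m2 by blast
    moreover have "GM2 *v x + x = (\<chi> i. if i = 2 then x$3 else 0)"
      unfolding GM_mv vec_eq_iff forall_3
      by (cases "x$1"; cases "x$2"; cases "x$3") simp_all
    ultimately show ?thesis by simp
  qed
  have d3: "x \<in> K \<Longrightarrow> (\<chi> i. if i = 3 then x$1 else 0) \<in> K" for x
  proof -
    assume "x \<in> K"
    then have "GM3 *v x + x \<in> K" using add m3 by blast
    moreover have "GM3 *v x + x = (\<chi> i. if i = 3 then x$1 else 0)"
      unfolding GM_mv vec_eq_iff forall_3
      by (cases "x$1"; cases "x$2"; cases "x$3") simp_all
    ultimately show ?thesis by simp
  qed
  have ee: "e1$1 = 1" "e2$2 = 1" "e3$3 = 1" by (simp_all add: e1_def e2_def e3_def)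
  have c12: "e1 \<in> K \<Longrightarrow> e3 \<in> K" using d3[of e1] unfolding ee by (simp add: e3_def)
  have c31: "e3 \<in> K \<Longrightarrow> e2 \<in> K" using d2[of e3] unfolding ee by (simp add: e2_def)
  have c23: "e2 \<in> K \<Longrightarrow> e1 \<in> K" using d1[of e2] unfolding ee by (simp add: e1_def)
  have "e1 \<in> K \<or> e2 \<in> K \<or> e3 \<in> K"
  proof -
    have "v$1 = 1 \<or> v$2 = 1 \<or> v$3 = 1" using v(2) by (auto simp: vec_eq_iff forall_3)
    moreover have "v$1 = 1 \<Longrightarrow> e3 \<in> K"
    proof -
      assume h: "v$1 = 1"
      have "(\<chi> i. if i = 3 then v$1 else 0) = e3" unfolding e3_def h ..
      then show ?thesis using d3[OF v(1)] by simp
    qed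
    moreover have "v$2 = 1 \<Longrightarrow> e1 \<in> K"
    proof -
      assume h: "v$2 = 1"
      have "(\<chi> i. if i = 1 then v$2 else 0) = e1" unfolding e1_def h ..
      then show ?thesis using d1[OF v(1)] by simp
    qed
    moreover have "v$3 = 1 \<Longrightarrow> e2 \<in> K"
    proof -
      assume h: "v$3 = 1"
      have "(\<chi> i. if i = 2 then v$3 else 0) = e2" unfolding e2_def h ..
      then show ?thesis using d2[OF v(1)] by simp
    qed
    ultimately show ?thesis by blast
  qed
  then have all: "e1 \<in> K" "e2 \<in> K" "e3 \<in> K" using c12 c31 c23 by blast+
  have bb: "x + x = (0::bit)" for x by (cases x) simp_all
  have "(e1 + e1)$i = 0" for i by (simp only: vector_add_component bb zero_index)
  then have "e1 + e1 = 0" by (simp only: vec_eq_iff zero_index) simp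
  then have z: "0 \<in> K" using add[OF all(1) all(1)] by simp
  have sc: "x \<in> K \<Longrightarrow> c *s x \<in> K" for c x
    using z by (cases c) simp_all
  have "w = w$1 *s e1 + (w$2 *s e2 + w$3 *s e3)"
    by (simp add: vec_eq_iff forall_3 e1_def e2_def e3_def)
  moreover have "w$1 *s e1 + (w$2 *s e2 + w$3 *s e3) \<in> K"
    using all by (intro add sc)
  ultimately show ?thesis by simp
qed

lemma mv_axis: "(A *v axis j (1::'a::comm_semiring_1)) $ i = A $ i $ j"
  by (simp add: matrix_vector_mult_def axis_def mult.commute[of _ "if _ then _ else _"] if_distrib cong: if_cong)

lemma mm_entry: "(A ** B) $ i $ j = (A *v (\<chi> l. B $ l $ j)) $ i"
  by (simp add: matrix_matrix_mult_def matrix_vector_mult_def)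

lemma det_zero_row':
  fixes A :: "'a::comm_ring_1^'n^'n"
  assumes "\<And>j. A $ k $ j = 0"
  shows "det A = 0"
  unfolding det_def
proof (rule sum.neutral, intro ballI)
  fix p
  have "prod (\<lambda>i. A $ i $ p i) UNIV = 0"
    by (rule prod_zero) (use assms in auto)
  then show "of_int (sign p) * prod (\<lambda>i. A $ i $ p i) UNIV = 0" by simp
qed

lemma det_zero_col':
  fixes A :: "'a::comm_ring_1^'n^'n"
  assumes "\<And>i. A $ i $ k = 0"
  shows "det A = 0"
proof -
  have "det (transpose A) = 0" by (rule det_zero_row'[where k=k]) (simp add: transpose_def assms)
  then show ?thesis by simp
qed

lemma det_diag_but_row:
  fixes A :: "'a::comm_ring_1^'n^'n"
  assumes ld: "\<And>i j. i \<noteq> k \<Longrightarrow> i \<noteq> j \<Longrightarrow> A$i$j = 0"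
  shows "det A = prod (\<lambda>i. A$i$i) (UNIV::'n set)"
proof -
  let ?U = "UNIV:: 'n set"
  let ?PU = "{p. p permutes ?U}"
  let ?pp = "\<lambda>p. of_int (sign p) * prod (\<lambda>i. A$i$p i) (UNIV :: 'n set)"
  have fU: "finite ?U" by simp
  from finite_permutations[OF fU] have fPU: "finite ?PU" .
  have id0: "{id} \<subseteq> ?PU"
    by (auto simp: permutes_id)
  have p0: "\<forall>p \<in> ?PU - {id}. ?pp p = 0"
  proof
    fix p
    assume p: "p \<in> ?PU - {id}"
    have "\<exists>i. i \<noteq> k \<and> p i \<noteq> i"
    proof (rule ccontr)
      assume "\<not> ?thesis"
      then have fix1: "\<And>i. i \<noteq> k \<Longrightarrow> p i = i" by blast
      have "p k = k"
      proof (rule ccontr)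
        assume "p k \<noteq> k"
        then have "p (p k) = p k" using fix1 by blast
        moreover have "inj p" using p permutes_inj by blast
        ultimately have "p k = k" by (meson injD)
        then show False using \<open>p k \<noteq> k\<close> by simp
      qed
      then have "p = id" using fix1 by (metis eq_id_iff)
      then show False using p by simp
    qed
    then obtain i where i: "i \<noteq> k" "p i \<noteq> i" by blast
    with ld have "A$i$p i = 0" by metis
    then have "\<exists>i \<in> ?U. A$i$p i = 0" by blast
    with prod_zero [OF fU] show "?pp p = 0"
      by force
  qed
  from sum.mono_neutral_cong_left[OF fPU id0 p0] show ?thesis
    unfolding det_def by (simp add: sign_id)
qed

lemma det_diag_but_col:
  fixes A :: "'a::comm_ring_1^'n^'n"
  assumes ld: "\<And>i j. j \<noteq> k \<Longrightarrow> i \<noteq> j \<Longrightarrow> A$i$j = 0"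
  shows "det A = prod (\<lambda>i. A$i$i) (UNIV::'n set)"
proof -
  have "det (transpose A) = prod (\<lambda>i. transpose A$i$i) (UNIV::'n set)"
    by (rule det_diag_but_row[where k=k]) (auto simp: transpose_def ld)
  then show ?thesis by (simp only: det_transpose) (simp add: transpose_def)
qed

lemma det_nz_inj:
  fixes P :: "z2^'n^'n"
  assumes "det P \<noteq> 0" "P *v x = 0"
  shows "x = 0"
proof -
  have "x $ k = 0" for k
  proof -
    define Q :: "z2^'n^'n" where "Q = (\<chi> i j. if j = k then x $ i else if i = j then 1 else 0)"
    have dQ: "det Q = x $ k"
    proof -
      have "det Q = prod (\<lambda>i. Q$i$i) UNIV"
        by (rule det_diag_but_col[where k=k]) (simp add: Q_def)
      also have "\<dots> = prod (\<lambda>i. if i = k then x $ k else 1) UNIV"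
        by (rule prod.cong) (auto simp: Q_def)
      also have "\<dots> = x $ k" by (simp add: prod.If_cases)
      finally show ?thesis .
    qed
    have "(\<chi> l. Q $ l $ k) = x" by (simp add: Q_def vec_eq_iff)
    then have "det (P ** Q) = 0"
      using assms(2) by (intro det_zero_col'[where k=k]) (simp add: mm_entry)
    then have "det P * x $ k = 0" by (simp add: det_mul dQ)
    then show ?thesis using assms(1) by simp
  qed
  then show ?thesis by (simp add: vec_eq_iff)
qed

lemma half_step: "a = 2 * b \<Longrightarrow> digits a (Suc N) \<noteq> 0 \<Longrightarrow> digits b N \<noteq> 0"
proof
  assume b: "a = 2 * b" and nz: "digits a (Suc N) \<noteq> 0" and h: "digits b N = 0"
  have "digits b (Suc N) mod 2 ^ N = 0" using h dig_prop[of b N] by simp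
  then obtain q where q: "digits b (Suc N) = 2 ^ N * q" by (meson mod_0_imp_dvd dvdE)
  have "digits a (Suc N) = (2 mod 2 ^ Suc N * digits b (Suc N)) mod 2 ^ Suc N"
    using b by (simp only: dig_mult dig_two)
  also have "\<dots> = (2 * digits b (Suc N)) mod 2 ^ Suc N" by (simp only: mod_mult_left_eq)
  also have "\<dots> = 0" using q by simp
  finally show False using nz by simp
qed

lemma primitive_aux:
  fixes f :: "'i \<Rightarrow> z2"
  shows "digits (f i0) N \<noteq> 0 \<Longrightarrow> \<exists>c g. c \<noteq> 0 \<and> (\<forall>i. f i = c * g i) \<and> (\<exists>i. z2_unit (g i))"
proof (induction N arbitrary: f i0)
  case 0 then show ?case by (simp add: dig_0)
next
  case (Suc N)
  show ?case
  proof (cases "\<exists>i. digits (f i) 1 = 1")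
    case True
    then show ?thesis using odd_unit by (intro exI[of _ 1] exI[of _ f]) auto
  next
    case False
    then have "\<forall>i. digits (f i) 1 = 0" using dig_range1 by blast
    then have "\<forall>i. \<exists>b. f i = 2 * b" using half_exists by blast
    then obtain h where h: "\<forall>i. f i = 2 * h i" by metis
    have "digits (h i0) N \<noteq> 0" using half_step h Suc.prems by blast
    then obtain c g where cg: "c \<noteq> 0" "\<forall>i. h i = c * g i" "\<exists>i. z2_unit (g i)"
      using Suc.IH by blast
    show ?thesis
      using cg h z2_two_nz by (intro exI[of _ "2 * c"] exI[of _ g]) (auto simp: mult.assoc)
  qed
qed

lemma primitive:
  fixes f :: "'i \<Rightarrow> z2"
  assumes "f i0 \<noteq> 0"
  shows "\<exists>c g. c \<noteq> 0 \<and> (\<forall>i. f i = c * g i) \<and> (\<exists>i. z2_unit (g i))"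
proof -
  obtain N where "digits (f i0) N \<noteq> digits 0 N" using assms z2_eqI by blast
  then show ?thesis using primitive_aux[of f i0 N] by (simp add: dig_zero)
qed

lemma primitive_vec:
  fixes y :: "z2^'n"
  assumes "y \<noteq> 0"
  shows "\<exists>c y1 k. c \<noteq> 0 \<and> y = c *s y1 \<and> z2_unit (y1 $ k)"
proof -
  obtain i0 where "y $ i0 \<noteq> 0" using assms by (auto simp: vec_eq_iff)
  then obtain c g where "c \<noteq> 0" "\<forall>i. y $ i = c * g i" "\<exists>i. z2_unit (g i)"
    using primitive[of "\<lambda>i. y $ i" i0] by blast
  then show ?thesis by (intro exI[of _ c] exI[of _ "\<chi> i. g i"]) (auto simp: vec_eq_iff)
qed

lemma unit_nz: "z2_unit u \<Longrightarrow> u \<noteq> 0"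
  by (auto simp: z2_unit_def)

lemma Dv: "diag_refl i0 *v (y::z2^'n) = (\<chi> i. if i = i0 then - y $ i else y $ i)"
proof -
  have "(diag_refl i0 *v y) $ i = (if i = i0 then - y $ i else y $ i)" for i
  proof -
    have "(diag_refl i0 *v y) $ i = (\<Sum>j\<in>UNIV. (if i = j then (if i = i0 then - 1 else 1) * y $ j else 0))"
      unfolding matrix_vector_mult_def diag_refl_def vec_lambda_beta by (rule sum.cong) auto
    also have "\<dots> = (if i = i0 then - 1 else 1) * y $ i" by simp
    finally show ?thesis by simp
  qed
  then show ?thesis by (simp add: vec_eq_iff)
qed

lemma scal_cancel_vec: "(a::z2) *s b = a' *s b \<Longrightarrow> b \<noteq> 0 \<Longrightarrow> a = a'"
proof -
  assume h: "a *s b = a' *s b" "b \<noteq> 0"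
  then have "(a - a') *s b = 0" by (simp add: vec_eq_iff algebra_simps)
  then have "a - a' = 0" using h(2) vec_scale_zero by blast
  then show "a = a'" by simp
qed

lemma form_lin:
  fixes \<sigma> :: "z2^'n^'n"
  assumes b: "b \<noteq> 0" and form: "\<And>x. \<sigma> *v x = x + f x *s b"
  shows "f (x + y) = f x + f y" "f (c *s x) = c * f x"
proof -
  have e: "x + y + f (x + y) *s b = (x + f x *s b) + (y + f y *s b)"
    using mv_add[of \<sigma> x y] by (simp only: form)
  have "f (x + y) * b $ i = (f x + f y) * b $ i" for i
  proof -
    have "x$i + y$i + f (x + y) * b $ i = (x$i + f x * b $ i) + (y$i + f y * b $ i)"
      using arg_cong[OF e, of "\<lambda>v. v $ i"] by (simp only: vector_add_component vector_smult_component)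
    then show ?thesis by algebra
  qed
  then have "f (x + y) *s b = (f x + f y) *s b" unfolding vec_eq_iff vector_smult_component by blast
  then show "f (x + y) = f x + f y" using b scal_cancel_vec by blast
  have e2: "c *s x + f (c *s x) *s b = c *s (x + f x *s b)"
    using mv_scale[of \<sigma> c x] by (simp only: form)
  have "f (c *s x) * b $ i = (c * f x) * b $ i" for i
  proof -
    have "c * x$i + f (c *s x) * b $ i = c * (x$i + f x * b $ i)"
      using arg_cong[OF e2, of "\<lambda>v. v $ i"] by (simp only: vector_add_component vector_smult_component)
    then show ?thesis by algebra
  qed
  then have "f (c *s x) *s b = (c * f x) *s b" unfolding vec_eq_iff vector_smult_component by blast
  then show "f (c *s x) = c * f x" using b scal_cancel_vec by blast
qed

lemma refl_form:
  fixes \<sigma> :: "z2^'n^'n"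
  assumes "is_reflection \<sigma>"
  shows "\<exists>b f. b \<noteq> 0 \<and> (\<forall>x. \<sigma> *v x = x + f x *s b) \<and> f b = -2"
proof -
  obtain P i0 where dP: "det P \<noteq> 0" and PE: "P ** \<sigma> = diag_refl i0 ** P"
    using assms unfolding is_reflection_def by blast
  have PS: "P *v (\<sigma> *v x) = diag_refl i0 *v (P *v x)" for x
    by (simp add: matrix_vector_mul_assoc PE)
  define p where "p x = (P *v x) $ i0" for x
  have key: "P *v (\<sigma> *v x - x) = (\<chi> i. if i = i0 then -2 * p x else 0)" for x
    by (simp add: mv_diff PS Dv vec_eq_iff p_def)
  have ss: "\<sigma> *v (\<sigma> *v x) = x" for x
  proof -
    have "P *v (\<sigma> *v (\<sigma> *v x) - x) = 0"
      by (simp add: mv_diff PS Dv vec_eq_iff)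
    then have "\<sigma> *v (\<sigma> *v x) - x = 0" by (rule det_nz_inj[OF dP])
    then show ?thesis by simp
  qed
  have "\<exists>x0. \<sigma> *v x0 \<noteq> x0"
  proof (rule ccontr)
    assume "\<not> ?thesis"
    then have "\<forall>x. \<sigma> *v x = x" by blast
    have "p x = 0" for x
    proof -
      have c1: "(P *v (\<sigma> *v x - x)) $ i0 = -2 * p x" by (simp add: key)
      have c2: "\<sigma> *v x - x = 0" using \<open>\<forall>x. \<sigma> *v x = x\<close> by simp
      have "-2 * p x = 0" using c1 unfolding c2 by simp
      then show ?thesis using z2_two_nz by simp
    qed
    then have "P $ i0 $ j = 0" for j using mv_axis[of P j i0] by (simp add: p_def)
    then have "det P = 0" by (rule det_zero_row')
    then show False using dP by simp
  qed
  then obtain x0 where x0: "\<sigma> *v x0 \<noteq> x0" by blast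
  define y0 where "y0 = \<sigma> *v x0 - x0"
  have y0nz: "y0 \<noteq> 0" using x0 by (simp add: y0_def)
  define \<gamma> where "\<gamma> = p x0"
  have gnz: "\<gamma> \<noteq> 0"
  proof
    assume "\<gamma> = 0"
    then have "P *v y0 = 0" using key[of x0] by (simp add: y0_def vec_eq_iff \<gamma>_def)
    then show False using det_nz_inj[OF dP] y0nz by blast
  qed
  have rel: "\<gamma> *s (\<sigma> *v x - x) = p x *s y0" for x
  proof -
    have "P *v (\<gamma> *s (\<sigma> *v x - x) - p x *s y0) = P *v (\<gamma> *s (\<sigma> *v x - x)) - P *v (p x *s y0)"
      by (rule mv_diff)
    also have "\<dots> = \<gamma> *s (P *v (\<sigma> *v x - x)) - p x *s (P *v y0)" by (simp only: mv_scale)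
    also have "\<dots> = 0" unfolding y0_def key \<gamma>_def by (simp add: vec_eq_iff algebra_simps)
    finally have "P *v (\<gamma> *s (\<sigma> *v x - x) - p x *s y0) = 0" .
    then have "\<gamma> *s (\<sigma> *v x - x) - p x *s y0 = 0" using det_nz_inj[OF dP] by blast
    then show ?thesis by simp
  qed
  obtain c y1 k where cy: "c \<noteq> 0" "y0 = c *s y1" "z2_unit (y1 $ k)"
    using primitive_vec[OF y0nz] by blast
  obtain w where w: "y1 $ k * w = 1" using cy(3) unfolding z2_unit_def by blast
  define f where "f x = (\<sigma> *v x - x) $ k * w" for x
  have form: "\<sigma> *v x = x + f x *s y1" for x
  proof -
    have "\<gamma> *s (\<sigma> *v x - x) = \<gamma> *s (f x *s y1)"
    proof -
      have ci: "\<gamma> * (\<sigma> *v x - x) $ i = p x * (c * y1 $ i)" for i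
      proof -
        have "(\<gamma> *s (\<sigma> *v x - x)) $ i = (p x *s (c *s y1)) $ i"
          using rel[of x] unfolding cy(2) by (rule arg_cong)
        then show ?thesis by (simp only: vector_smult_component)
      qed
      have comp: "\<gamma> * (f x * y1 $ i) = \<gamma> * (\<sigma> *v x - x) $ i" for i
      proof -
        have "\<gamma> * (f x * y1 $ i) = (\<gamma> * (\<sigma> *v x - x) $ k) * w * y1 $ i"
          by (simp add: f_def ac_simps)
        also have "\<dots> = p x * c * (y1 $ k * w) * y1 $ i"
          using ci[of k] by (simp add: ac_simps)
        also have "\<dots> = \<gamma> * (\<sigma> *v x - x) $ i"
          using ci[of i] w by (simp add: ac_simps)
        finally show ?thesis .
      qed
      show ?thesis unfolding vec_eq_iff vector_smult_component by (metis comp)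
    qed
    then have "\<sigma> *v x - x = f x *s y1" using vec_scale_cancel[OF gnz] by blast
    then show ?thesis by (simp add: algebra_simps)
  qed
  have y1nz: "y1 \<noteq> 0" using cy(3) unit_nz by (auto simp: vec_eq_iff)
  note lin = form_lin[OF y1nz form]
  have fx0: "f x0 \<noteq> 0" using x0 form[of x0] by auto
  have fs: "f (\<sigma> *v x0) = f x0 + f x0 * f y1" unfolding form[of x0] lin ..
  have eq: "x0 = x0 + f x0 *s y1 + (f x0 + f x0 * f y1) *s y1"
    using ss[of x0] unfolding form[of "\<sigma> *v x0"] fs unfolding form[of x0] by simp
  have "(f x0 + f x0 + f x0 * f y1) * y1 $ i = 0" for i
  proof -
    have "x0$i = x0$i + f x0 * y1$i + (f x0 + f x0 * f y1) * y1$i"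
      using arg_cong[OF eq, of "\<lambda>v. v$i"] by (simp only: vector_add_component vector_smult_component)
    then show ?thesis by algebra
  qed
  then have "(f x0 + f x0 + f x0 * f y1) *s y1 = 0" unfolding vec_eq_iff vector_smult_component zero_index by blast
  then have "f x0 + f x0 + f x0 * f y1 = 0" using vec_scale_zero y1nz by blast
  then have "f x0 * (2 + f y1) = 0" by algebra
  then have "2 + f y1 = 0" using fx0 by simp
  then have "f y1 = -2" by algebra
  then show ?thesis using y1nz form by blast
qed

lemma lin_sum:
  assumes add: "\<And>x y. f (x + y) = f x + (f y :: z2)" and f0: "f 0 = 0" and "finite A"
  shows "f (sum g A) = sum (\<lambda>j. f (g j)) A"
  using assms(3) by (induction A rule: finite_induct) (simp_all add: f0 add)

lemma lin_rep:
  fixes f :: "z2^'n \<Rightarrow> z2"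
  assumes add: "\<And>x y. f (x + y) = f x + f y" and hom: "\<And>c x. f (c *s x) = c * f x"
  shows "f x = (\<Sum>j\<in>UNIV. x $ j * f (axis j 1))"
proof -
  have f0: "f 0 = 0" using hom[of 0 0] by simp
  have "f x = f (\<Sum>j\<in>UNIV. x $ j *s axis j 1)" using basis_expansion[of x] by simp
  also have "\<dots> = (\<Sum>j\<in>UNIV. f (x $ j *s axis j 1))" by (rule lin_sum[OF add f0]) simp
  also have "\<dots> = (\<Sum>j\<in>UNIV. x $ j * f (axis j 1))" by (simp add: hom)
  finally show ?thesis .
qed

lemma refl_from_form:
  fixes \<sigma> :: "z2^'n^'n"
  assumes lat: "lat_aut \<sigma>" and b: "b \<noteq> 0" and form: "\<And>x. \<sigma> *v x = x + f x *s b" and fb: "f b = -2"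
  shows "is_reflection \<sigma>"
proof -
  note lin = form_lin[OF b form]
  define r where "r j = f (axis j 1)" for j
  have fx: "f x = (\<Sum>j\<in>UNIV. x $ j * r j)" for x
    unfolding r_def by (rule lin_rep[OF lin])
  obtain k where bk: "b $ k \<noteq> 0" using b by (auto simp: vec_eq_iff)
  define P :: "z2^'n^'n" where
    "P = (\<chi> i j. if i = k then r j else (if i = j then b $ k else 0) - (if j = k then b $ i else 0))"
  have Pv: "(P *v v) $ i = (if i = k then f v else b $ k * v $ i - b $ i * v $ k)" for v i
  proof (cases "i = k")
    case True
    then show ?thesis by (simp add: P_def matrix_vector_mult_def fx mult.commute)
  next
    case False
    have "(P *v v) $ i = (\<Sum>j\<in>UNIV. (if i = j then b $ k * v $ j else 0) - (if j = k then b $ i * v $ j else 0))"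
      unfolding P_def matrix_vector_mult_def vec_lambda_beta using False
      by (intro sum.cong) auto
    also have "\<dots> = b $ k * v $ i - b $ i * v $ k"
      by (simp add: sum_subtractf)
    finally show ?thesis using False by simp
  qed
  have PE: "P ** \<sigma> = diag_refl k ** P"
  proof (subst matrix_eq, intro allI)
    fix x
    have "(P ** \<sigma>) *v x = P *v x + f x *s (P *v b)"
      by (simp add: matrix_vector_mul_assoc[symmetric] form mv_add mv_scale)
    moreover have "(diag_refl k ** P) *v x = diag_refl k *v (P *v x)"
      by (simp add: matrix_vector_mul_assoc[symmetric])
    moreover have "P *v x + f x *s (P *v b) = diag_refl k *v (P *v x)"
    proof -
      have "(P *v x + f x *s (P *v b)) $ i = (diag_refl k *v (P *v x)) $ i" for i
      proof (cases "i = k")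
        case True
        have "f x + f x * f b = - f x" using fb by algebra
        then show ?thesis using True by (simp add: Dv Pv)
      next
        case False
        have "b $ k * x $ i - b $ i * x $ k + f x * (b $ k * b $ i - b $ i * b $ k) = b $ k * x $ i - b $ i * x $ k"
          by algebra
        then show ?thesis using False by (simp add: Dv Pv)
      qed
      then show ?thesis by (simp add: vec_eq_iff)
    qed
    ultimately show "(P ** \<sigma>) *v x = (diag_refl k ** P) *v x" by simp
  qed
  define C :: "z2^'n^'n" where "C = (\<chi> i j. if j = k then b $ i else if i = j then 1 else 0)"
  have dC: "det C = b $ k"
  proof -
    have "det C = prod (\<lambda>i. C$i$i) UNIV"
      by (rule det_diag_but_col[where k=k]) (simp add: C_def)
    also have "\<dots> = prod (\<lambda>i. if i = k then b $ k else 1) UNIV"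
      by (rule prod.cong) (auto simp: C_def)
    also have "\<dots> = b $ k" by (simp add: prod.If_cases)
    finally show ?thesis .
  qed
  have colC: "(\<chi> l. C $ l $ j) = (if j = k then b else axis j 1)" for j
    by (auto simp: C_def vec_eq_iff axis_def)
  have PC: "(P ** C) $ i $ j = (if j = k then (P *v b) $ i else (P *v axis j 1) $ i)" for i j
    by (simp add: mm_entry colC)
  have "det (P ** C) = prod (\<lambda>i. (P ** C)$i$i) UNIV"
  proof (rule det_diag_but_row[where k=k])
    fix i j :: 'n
    assume "i \<noteq> k" "i \<noteq> j"
    then show "(P ** C) $ i $ j = 0"
      by (auto simp: PC Pv axis_def mult.commute)
  qed
  moreover have "(P ** C)$i$i \<noteq> 0" for i
  proof (cases "i = k")
    case True
    then show ?thesis using fb z2_two_nz by (simp add: PC Pv)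
  next
    case False
    then show ?thesis using bk by (simp add: PC Pv axis_def)
  qed
  ultimately have "det (P ** C) \<noteq> 0" by simp
  then have dP: "det P \<noteq> 0" by (simp add: det_mul)
  show ?thesis unfolding is_reflection_def using lat dP PE by blast
qed

lemma sat_props:
  assumes "saturated S"
  shows sat_zero: "0 \<in> S"
    and sat_add: "x \<in> S \<Longrightarrow> y \<in> S \<Longrightarrow> x + y \<in> S"
    and sat_scale: "x \<in> S \<Longrightarrow> c *s x \<in> S"
    and sat_neg: "x \<in> S \<Longrightarrow> - x \<in> S"
    and sat_diff: "x \<in> S \<Longrightarrow> y \<in> S \<Longrightarrow> x - y \<in> S"
    and sat_cancel: "c \<noteq> 0 \<Longrightarrow> c *s x \<in> S \<Longrightarrow> x \<in> S"
proof -
  show "0 \<in> S" using assms unfolding saturated_def z2_submodule_def by blast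
  show add: "x \<in> S \<Longrightarrow> y \<in> S \<Longrightarrow> x + y \<in> S" for x y using assms unfolding saturated_def z2_submodule_def by blast
  show sc: "x \<in> S \<Longrightarrow> c *s x \<in> S" for x c using assms unfolding saturated_def z2_submodule_def by blast
  have m1: "(-1) *s x = - x" for x :: "z2^'n" by (simp add: vec_eq_iff)
  show neg: "x \<in> S \<Longrightarrow> - x \<in> S" for x using sc[of x "-1"] unfolding m1 .
  show "x \<in> S \<Longrightarrow> y \<in> S \<Longrightarrow> x - y \<in> S" using add[of x "- y"] neg[of y] by simp
  show "c \<noteq> 0 \<Longrightarrow> c *s x \<in> S \<Longrightarrow> x \<in> S" using assms unfolding saturated_def by blast
qed

locale L77 =
  fixes W :: "(z2^'n^'n) set" and WD :: "(z2^3^3) set"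
    and S1 S2 :: "(z2^'n) set" and W1 W2 :: "(z2^'n^'n) set"
    and F :: "z2^3^'n" and \<psi> :: "z2^3^3 \<Rightarrow> z2^'n^'n"
  assumes crl: "is_crl W" and di4: "DI4_like WD" and dec: "rat_decomp W S1 S2 W1 W2"
    and Finj: "inj ((*v) F)" and Frange: "range ((*v) F) \<subseteq> S2"
    and Ffin: "\<forall>x\<in>S2. \<exists>c. c \<noteq> 0 \<and> c *s x \<in> range ((*v) F)"
    and psibij: "bij_betw \<psi> WD W2" and psihom: "\<forall>a\<in>WD. \<forall>b\<in>WD. \<psi> (a ** b) = \<psi> a ** \<psi> b"
    and psiF: "\<forall>u\<in>WD. \<psi> u ** F = F ** u"
begin

lemma sat1: "saturated S1"
  using dec unfolding rat_decomp_def by (elim conjE) assumption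

lemma sat2: "saturated S2"
  using dec unfolding rat_decomp_def by (elim conjE) assumption

lemma int12: "S1 \<inter> S2 = {0}"
  using dec unfolding rat_decomp_def by (elim conjE) assumption

lemma span: "\<forall>x. \<exists>c. c \<noteq> 0 \<and> (\<exists>a\<in>S1. \<exists>b\<in>S2. c *s x = a + b)"
  using dec unfolding rat_decomp_def by (elim conjE) assumption

lemma W1sub: "W1 \<subseteq> W"
  using dec unfolding rat_decomp_def by (elim conjE) assumption

lemma W2sub: "W2 \<subseteq> W"
  using dec unfolding rat_decomp_def by (elim conjE) assumption

lemma one1: "mat 1 \<in> W1"
  using dec unfolding rat_decomp_def by (elim conjE) assumption

lemma one2: "mat 1 \<in> W2"
  using dec unfolding rat_decomp_def by (elim conjE) assumption

lemma cl1: "\<forall>a\<in>W1. \<forall>b\<in>W1. a ** b \<in> W1"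
  using dec unfolding rat_decomp_def by (elim conjE) assumption

lemma cl2: "\<forall>a\<in>W2. \<forall>b\<in>W2. a ** b \<in> W2"
  using dec unfolding rat_decomp_def by (elim conjE) assumption

lemma Wprod: "W = {a ** b | a b. a \<in> W1 \<and> b \<in> W2}"
  using dec unfolding rat_decomp_def by (elim conjE) assumption

lemma W12: "W1 \<inter> W2 = {mat 1}"
  using dec unfolding rat_decomp_def by (elim conjE) assumption

lemma comm: "\<forall>a\<in>W1. \<forall>b\<in>W2. a ** b = b ** a"
  using dec unfolding rat_decomp_def by (elim conjE) assumption

lemma act1: "\<forall>w\<in>W1. (\<forall>x\<in>S1. w *v x \<in> S1) \<and> (\<forall>x\<in>S2. w *v x = x)"
  using dec unfolding rat_decomp_def by (elim conjE) assumption

lemma act2: "\<forall>w\<in>W2. (\<forall>x\<in>S2. w *v x \<in> S2) \<and> (\<forall>x\<in>S1. w *v x = x)"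
  using dec unfolding rat_decomp_def by (elim conjE) assumption

lemma psi_in: "u \<in> WD \<Longrightarrow> \<psi> u \<in> W2"
  using psibij by (auto simp: bij_betw_def)

lemma F_nz: "F \<noteq> 0"
proof
  assume h: "F = 0"
  have "axis 1 (1::z2) = (0::z2^3)" by (rule injD[OF Finj]) (simp add: h)
  then have "(axis 1 (1::z2) :: z2^3) $ 1 = (0::z2^3) $ 1" by simp
  then show False by simp
qed

definition cF where "cF = (SOME c. c \<noteq> 0 \<and> (\<exists>g. (\<forall>p. F $ fst p $ snd p = c * g p) \<and> (\<exists>p. z2_unit (g p))))"
definition gF where "gF = (SOME g. (\<forall>p. F $ fst p $ snd p = cF * g p) \<and> (\<exists>p. z2_unit (g p)))"
definition G :: "z2^3^'n" where "G = (\<chi> i j. gF (i, j))"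

lemma cF_gF: "cF \<noteq> 0" "\<forall>p. F $ fst p $ snd p = cF * gF p" "\<exists>p. z2_unit (gF p)"
proof -
  obtain i j where "F $ i $ j \<noteq> 0" using F_nz by (auto simp: vec_eq_iff)
  then have ex: "\<exists>c g. c \<noteq> 0 \<and> (\<forall>p. F $ fst p $ snd p = c * g p) \<and> (\<exists>p. z2_unit (g p))"
    using primitive[of "\<lambda>p. F $ fst p $ snd p" "(i, j)"] by auto
  then have ex: "\<exists>c. c \<noteq> 0 \<and> (\<exists>g. (\<forall>p. F $ fst p $ snd p = c * g p) \<and> (\<exists>p. z2_unit (g p)))" by blast
  then have c: "cF \<noteq> 0 \<and> (\<exists>g. (\<forall>p. F $ fst p $ snd p = cF * g p) \<and> (\<exists>p. z2_unit (g p)))"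
    unfolding cF_def by (rule someI_ex[where P="\<lambda>c. c \<noteq> 0 \<and> (\<exists>g. (\<forall>p. F $ fst p $ snd p = c * g p) \<and> (\<exists>p. z2_unit (g p)))"])
  then show "cF \<noteq> 0" by blast
  from c have "(\<forall>p. F $ fst p $ snd p = cF * gF p) \<and> (\<exists>p. z2_unit (gF p))"
    unfolding gF_def by (intro someI_ex[where P="\<lambda>g. (\<forall>p. F $ fst p $ snd p = cF * g p) \<and> (\<exists>p. z2_unit (g p))"]) blast
  then show "\<forall>p. F $ fst p $ snd p = cF * gF p" "\<exists>p. z2_unit (gF p)" by blast+
qed

lemma FG: "F *v y = cF *s (G *v y)"
proof -
  have "F $ i $ j = cF * G $ i $ j" for i j using cF_gF(2)[rule_format, of "(i, j)"] by (simp add: G_def)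
  then show ?thesis by (simp add: matrix_vector_mult_def vec_eq_iff sum_distrib_left mult.assoc)
qed

lemma G_in: "G *v y \<in> S2"
proof -
  have "F *v y \<in> S2" using Frange by blast
  then have "cF *s (G *v y) \<in> S2" by (simp only: FG)
  then show ?thesis using sat_cancel[OF sat2 cF_gF(1)] by blast
qed

lemma G_inj: "G *v y = G *v y' \<Longrightarrow> y = y'"
proof -
  assume "G *v y = G *v y'"
  then have "F *v y = F *v y'" by (simp only: FG)
  then show "y = y'" by (rule injD[OF Finj])
qed

lemma G_int: "u \<in> WD \<Longrightarrow> \<psi> u ** G = G ** u"
proof -
  assume u: "u \<in> WD"
  show ?thesis
  proof (subst matrix_eq, intro allI)
    fix y
    have "cF *s ((\<psi> u ** G) *v y) = \<psi> u *v (F *v y)"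
      by (simp add: matrix_vector_mul_assoc[symmetric] FG mv_scale)
    also have "\<dots> = (F ** u) *v y" using psiF u by (simp add: matrix_vector_mul_assoc)
    also have "\<dots> = cF *s ((G ** u) *v y)"
      by (simp add: matrix_vector_mul_assoc[symmetric] FG)
    finally show "(\<psi> u ** G) *v y = (G ** u) *v y" using vec_scale_cancel[OF cF_gF(1)] by blast
  qed
qed

lemma G_int_v: "u \<in> WD \<Longrightarrow> \<psi> u *v (G *v y) = G *v (u *v y)"
  by (simp add: matrix_vector_mul_assoc G_int)

lemma redWD: "mat_red ` WD = {M. det M \<noteq> 0}"
  using di4 unfolding DI4_like_def by (elim conjE) assumption

lemma GM_in: "GM1 \<in> mat_red ` WD" "GM2 \<in> mat_red ` WD" "GM3 \<in> mat_red ` WD"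
  unfolding redWD using GM_det by simp_all

lemma redG_nz: "mat_red G \<noteq> 0"
proof
  assume h: "mat_red G = 0"
  obtain p where "z2_unit (gF p)" using cF_gF(3) by blast
  then have "(mat_red G) $ fst p $ snd p = 1" by (simp add: mat_red_def G_def red_unit)
  then show False using h by simp
qed

lemma Kstab: "mat_red G *v vred y = 0 \<Longrightarrow> vred y = 0"
proof (rule ccontr)
  assume h: "mat_red G *v vred y = 0" "vred y \<noteq> 0"
  define K where "K = {v. mat_red G *v v = 0}"
  have cl: "v \<in> K \<Longrightarrow> M \<in> mat_red ` WD \<Longrightarrow> M *v v \<in> K" for v M
  proof -
    assume v: "v \<in> K" and "M \<in> mat_red ` WD"
    then obtain u where u: "u \<in> WD" "M = mat_red u" by blast
    have "mat_red G *v (M *v v) = mat_red (G ** u) *v v"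
      by (simp add: u mat_red_mult matrix_vector_mul_assoc)
    also have "\<dots> = mat_red (\<psi> u) *v (mat_red G *v v)"
      by (simp add: G_int[OF u(1), symmetric] mat_red_mult matrix_vector_mul_assoc)
    also have "\<dots> = 0" using v by (simp add: K_def)
    finally show ?thesis by (simp add: K_def)
  qed
  have all: "w \<in> K" for w
  proof (rule GM_span[of K "vred y"])
    show "x + y \<in> K" if "x \<in> K" "y \<in> K" for x y using that by (simp add: K_def mv_add)
    show "GM1 *v x \<in> K" if "x \<in> K" for x using cl that GM_in by blast
    show "GM2 *v x \<in> K" if "x \<in> K" for x using cl that GM_in by blast
    show "GM3 *v x \<in> K" if "x \<in> K" for x using cl that GM_in by blast
    show "vred y \<in> K" using h by (simp add: K_def)
    show "vred y \<noteq> 0" by (rule h(2))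
  qed
  have "mat_red G $ i $ j = 0" for i j
  proof -
    have "mat_red G *v axis j 1 = 0" using all[of "axis j 1"] by (simp add: K_def)
    then show ?thesis using mv_axis[of "mat_red G" j i] by simp
  qed
  then have "mat_red G = 0" by (simp add: vec_eq_iff)
  then show False using redG_nz by simp
qed

lemma G_surj_aux: "(2::z2) ^ j *s x = G *v y \<Longrightarrow> x \<in> range ((*v) G)"
proof (induction j arbitrary: x y)
  case 0 then show ?case by simp
next
  case (Suc j)
  have e: "G *v y = 2 *s (2 ^ j *s x)" using Suc.prems by (metis power_Suc vector_smult_assoc)
  have "mat_red G *v vred y = 0" by (simp only: vred_mult[symmetric] e vred_scale2)
  then have "vred y = 0" by (rule Kstab)
  then obtain y' where y': "y = 2 *s y'" using vred_zero_half by blast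
  have "2 *s (G *v y') = 2 *s (2 ^ j *s x)" using e by (simp only: y' mv_scale)
  then have "G *v y' = 2 ^ j *s x" using vec_scale_cancel[OF z2_two_nz] by blast
  then have "2 ^ j *s x = G *v y'" by (rule sym)
  then show ?case by (rule Suc.IH)
qed

lemma G_surj: "x \<in> S2 \<Longrightarrow> x \<in> range ((*v) G)"
proof -
  assume x: "x \<in> S2"
  obtain d y0 where d: "d \<noteq> 0" "d *s x = F *v y0" using Ffin x by blast
  then have dx: "d *s x = G *v (cF *s y0)" by (simp add: FG mv_scale)
  obtain s u where su: "z2_unit u" "d = 2 ^ s * u" using val_decomp[OF d(1)] by blast
  obtain u' where u': "u * u' = 1" using su(1) unfolding z2_unit_def by blast
  have "u' * d = 2 ^ s * (u * u')" by (simp add: su(2) ac_simps)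
  then have ud: "u' * d = 2 ^ s" using u' by simp
  have "2 ^ s *s x = u' *s (d *s x)" by (simp add: vector_smult_assoc ud)
  also have "\<dots> = G *v (u' *s (cF *s y0))" by (simp add: dx mv_scale)
  finally show ?thesis by (rule G_surj_aux)
qed

lemma G_bij: "bij_betw ((*v) G) UNIV S2"
  unfolding bij_betw_def inj_on_def using G_in G_surj G_inj by blast

end

lemma mv_negm: "(- A) *v y = - (A *v (y::'a::comm_ring_1^'n))"
  by (simp add: matrix_vector_mult_def vec_eq_iff sum_negf)

lemma vred_diff: "vred (a - b) = vred a + vred b"
  by (simp add: vred_def vec_eq_iff red_diff)

lemma bitvec_eq: "(a::bit^'n) + b = 0 \<Longrightarrow> a = b"
proof -
  assume h: "a + b = 0"
  have "a $ i = b $ i" for i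
  proof -
    have "a $ i + b $ i = 0" using h by (metis vector_add_component zero_index)
    then show ?thesis by (cases "a $ i"; cases "b $ i") simp_all
  qed
  then show ?thesis by (simp add: vec_eq_iff)
qed

context L77
begin

lemma negone_in: "- mat 1 \<in> WD"
proof -
  have "{A\<in>WD. mat_red A = mat 1} = {mat 1, - mat 1}" using di4 unfolding DI4_like_def by (elim conjE) assumption
  then show ?thesis by blast
qed

definition z where "z = \<psi> (- mat 1)"

lemma z_in: "z \<in> W2" unfolding z_def using psi_in negone_in .

lemma zG: "z *v (G *v y) = - (G *v y)"
  unfolding z_def G_int_v[OF negone_in] mv_negm by (simp add: mv_neg)

lemma zS1: "a \<in> S1 \<Longrightarrow> z *v a = a" using act2 z_in by blast

lemma zS2: "b \<in> S2 \<Longrightarrow> z *v b = - b" using G_surj zG by blast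

lemma x_plus_minus: "x + z *v x \<in> S1 \<and> x - z *v x \<in> S2"
proof -
  obtain c a b where cab: "c \<noteq> 0" "a \<in> S1" "b \<in> S2" "c *s x = a + b" using span by blast
  have czx: "c *s (z *v x) = a - b"
    by (metis cab(2,3,4) mv_add mv_scale zS1 zS2 diff_conv_add_uminus)
  have e1: "c *s (x + z *v x) = a + a" using cab(4) czx
    by (simp add: vector_add_ldistrib)
  have "c *s (x + z *v x) \<in> S1" unfolding e1 by (rule sat_add[OF sat1 cab(2) cab(2)])
  then have s1: "x + z *v x \<in> S1" using sat_cancel[OF sat1 cab(1)] by blast
  have e2: "c *s (x - z *v x) = b + b" using cab(4) czx
    by (simp add: vector_ssub_ldistrib)
  have "c *s (x - z *v x) \<in> S2" unfolding e2 by (rule sat_add[OF sat2 cab(3) cab(3)])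
  then have s2: "x - z *v x \<in> S2" using sat_cancel[OF sat2 cab(1)] by blast
  show ?thesis using s1 s2 by blast
qed

lemma fixmod: assumes y: "x - z *v x = G *v y" and u: "u \<in> WD"
  shows "mat_red u *v vred y = vred y"
proof -
  define w where "w = \<psi> u"
  have w: "w \<in> W2" using psi_in u by (simp add: w_def)
  have s1: "x + z *v x \<in> S1" using x_plus_minus by blast
  have x2: "2 *s x = (x + z *v x) + G *v y" using y by (simp add: vec_eq_iff algebra_simps)
  have wa: "w *v (x + z *v x) = x + z *v x" using act2 w s1 by blast
  have wg: "w *v (G *v y) = G *v (u *v y)" using G_int_v[OF u] by (simp add: w_def)
  have wx2: "w *v (2 *s x) = (x + z *v x) + G *v (u *v y)"
    unfolding x2 mv_add[of w "x + z *v x" "G *v y"] wa wg ..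
  have "2 *s (w *v x - x) = w *v (2 *s x) - 2 *s x" by (simp add: mv_scale vector_ssub_ldistrib)
  also have "\<dots> = (x + z *v x) + G *v (u *v y) - 2 *s x" unfolding wx2 ..
  also have "\<dots> = (x + z *v x) + G *v (u *v y) - ((x + z *v x) + G *v y)" by (subst x2) (rule refl)
  also have "\<dots> = G *v (u *v y) - G *v y" by simp
  also have "\<dots> = G *v (u *v y - y)" by (simp add: mv_diff)
  finally have e: "2 *s (w *v x - x) = G *v (u *v y - y)" .
  then have "w *v x - x \<in> S2" using sat_cancel[OF sat2 z2_two_nz] G_in by metis
  then obtain y'' where y'': "w *v x - x = G *v y''" using G_surj by blast
  have "G *v (2 *s y'') = G *v (u *v y - y)" using e y'' by (simp add: mv_scale)
  then have "u *v y - y = 2 *s y''" using G_inj by metis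
  then have "vred (u *v y - y) = 0" by (simp add: vred_scale2)
  then have "vred (u *v y) = vred y" unfolding vred_diff by (rule bitvec_eq)
  then show ?thesis by (simp add: vred_mult)
qed

lemma dec_ex: "\<exists>a\<in>S1. \<exists>b\<in>S2. x = a + b"
proof -
  have s2: "x - z *v x \<in> S2" and s1: "x + z *v x \<in> S1" using x_plus_minus by blast+
  obtain y where y: "x - z *v x = G *v y" using G_surj[OF s2] by blast
  have fx: "M *v vred y = vred y" if "M \<in> mat_red ` WD" for M
    using that fixmod[OF y] by blast
  have "vred y = 0" using GM_fix fx GM_in by blast
  then obtain y' where y': "y = 2 *s y'" using vred_zero_half by blast
  have "2 *s (x - G *v y') = x + z *v x"
  proof -
    have "x - z *v x = 2 *s (G *v y')" using y y' by (simp add: mv_scale)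
    then show ?thesis by (simp add: vec_eq_iff algebra_simps)
  qed
  then have "x - G *v y' \<in> S1" using s1 sat_cancel[OF sat1 z2_two_nz] by metis
  moreover have "G *v y' \<in> S2" by (rule G_in)
  ultimately show ?thesis by (intro bexI[of _ "x - G *v y'"] bexI[of _ "G *v y'"]) simp_all
qed

end

context L77
begin

lemma dec_uniq:
  assumes "a \<in> S1" "a' \<in> S1" "b \<in> S2" "b' \<in> S2" "a + b = a' + b'"
  shows "a = a'"
proof -
  have "a - a' = b' - b" using assms(5) by (simp add: algebra_simps)
  moreover have "a - a' \<in> S1" using sat_diff[OF sat1 assms(1,2)] .
  moreover have "b' - b \<in> S2" using sat_diff[OF sat2 assms(4,3)] .
  ultimately have "a - a' \<in> S1 \<inter> S2" by simp
  then show ?thesis using int12 by simp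
qed

lemma pr1_eq: "a \<in> S1 \<Longrightarrow> x - a \<in> S2 \<Longrightarrow> lat_proj1 S1 S2 x = a"
  unfolding lat_proj1_def
proof (rule the_equality)
  assume "a \<in> S1" "x - a \<in> S2"
  then show "a \<in> S1 \<and> x - a \<in> S2" by blast
  fix a' assume "a' \<in> S1 \<and> x - a' \<in> S2"
  then show "a' = a" using dec_uniq[of a' a "x - a'" "x - a"] \<open>a \<in> S1\<close> \<open>x - a \<in> S2\<close> by simp
qed

lemma pr1: "lat_proj1 S1 S2 x \<in> S1" "x - lat_proj1 S1 S2 x \<in> S2"
proof -
  obtain a b where "a \<in> S1" "b \<in> S2" "x = a + b" using dec_ex by blast
  then have "lat_proj1 S1 S2 x = a" by (intro pr1_eq) simp_all
  then show "lat_proj1 S1 S2 x \<in> S1" "x - lat_proj1 S1 S2 x \<in> S2"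
    using \<open>a \<in> S1\<close> \<open>b \<in> S2\<close> \<open>x = a + b\<close> by simp_all
qed

lemma pr1_S2: "x \<in> S2 \<Longrightarrow> lat_proj1 S1 S2 x = 0"
  by (rule pr1_eq) (simp_all add: sat_zero[OF sat1])

lemma pr1_S1: "x \<in> S1 \<Longrightarrow> lat_proj1 S1 S2 x = x"
  by (rule pr1_eq) (simp_all add: sat_zero[OF sat2])

lemma pr1_add: "lat_proj1 S1 S2 (x + y) = lat_proj1 S1 S2 x + lat_proj1 S1 S2 y"
proof (rule pr1_eq)
  show "lat_proj1 S1 S2 x + lat_proj1 S1 S2 y \<in> S1" using pr1(1) sat_add[OF sat1] by blast
  have "x + y - (lat_proj1 S1 S2 x + lat_proj1 S1 S2 y) = (x - lat_proj1 S1 S2 x) + (y - lat_proj1 S1 S2 y)"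
    by (simp add: algebra_simps)
  then show "x + y - (lat_proj1 S1 S2 x + lat_proj1 S1 S2 y) \<in> S2" using pr1(2) sat_add[OF sat2] by metis
qed

lemma pr1_scale: "lat_proj1 S1 S2 (c *s x) = c *s lat_proj1 S1 S2 x"
proof (rule pr1_eq)
  show "c *s lat_proj1 S1 S2 x \<in> S1" using pr1(1) sat_scale[OF sat1] by blast
  have "c *s x - c *s lat_proj1 S1 S2 x = c *s (x - lat_proj1 S1 S2 x)"
    by (simp add: vector_ssub_ldistrib)
  then show "c *s x - c *s lat_proj1 S1 S2 x \<in> S2" using pr1(2) sat_scale[OF sat2] by metis
qed

definition H where "H x = (THE y. G *v y = x - lat_proj1 S1 S2 x)"

lemma GH: "G *v H x = x - lat_proj1 S1 S2 x"
proof -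
  have "x - lat_proj1 S1 S2 x \<in> range ((*v) G)" by (rule G_surj[OF pr1(2)])
  then obtain y where y: "G *v y = x - lat_proj1 S1 S2 x" by (auto elim!: rangeE)
  have "H x = y" unfolding H_def
  proof (rule the_equality[where P="\<lambda>y. G *v y = x - lat_proj1 S1 S2 x", OF y])
    fix y' assume "G *v y' = x - lat_proj1 S1 S2 x"
    then have "G *v y' = G *v y" using y by simp
    then show "y' = y" by (rule G_inj)
  qed
  then show ?thesis using y by simp
qed

lemma HG: "H (G *v y) = y"
  using GH[of "G *v y"] pr1_S2[OF G_in] G_inj by simp

lemma H_add: "H (x + y) = H x + H y"
  by (rule G_inj) (simp add: GH mv_add pr1_add algebra_simps)

lemma H_scale: "H (c *s x) = c *s H x"
  by (rule G_inj) (simp add: GH mv_scale pr1_scale vector_ssub_ldistrib)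

lemma x_split: "x = lat_proj1 S1 S2 x + G *v H x"
  by (simp add: GH)

lemma agree:
  assumes "\<And>s. s \<in> S1 \<Longrightarrow> A *v s = B *v s" "\<And>s. s \<in> S2 \<Longrightarrow> A *v s = B *v s"
  shows "A = B"
proof (subst matrix_eq, intro allI)
  fix x
  obtain a b where "a \<in> S1" "b \<in> S2" "x = a + b" using dec_ex by blast
  then show "A *v x = B *v x" using assms by (simp add: mv_add)
qed

lemma W1_nonid: "a \<in> W1 \<Longrightarrow> a \<noteq> mat 1 \<Longrightarrow> \<exists>s\<in>S1. a *v s \<noteq> s"
proof (rule ccontr)
  assume a: "a \<in> W1" "a \<noteq> mat 1" "\<not> (\<exists>s\<in>S1. a *v s \<noteq> s)"
  have "a = mat 1" by (rule agree) (use a act1 in auto)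
  then show False using a(2) by simp
qed

lemma W2_nonid: "b \<in> W2 \<Longrightarrow> b \<noteq> mat 1 \<Longrightarrow> \<exists>s\<in>S2. b *v s \<noteq> s"
proof (rule ccontr)
  assume a: "b \<in> W2" "b \<noteq> mat 1" "\<not> (\<exists>s\<in>S2. b *v s \<noteq> s)"
  have "b = mat 1" by (rule agree) (use a act2 in auto)
  then show False using a(2) by simp
qed

lemma refl_split:
  assumes s: "\<sigma> \<in> W" "is_reflection \<sigma>"
  shows "\<sigma> \<in> W1 \<or> \<sigma> \<in> W2"
proof -
  obtain a b where ab: "a \<in> W1" "b \<in> W2" "\<sigma> = a ** b" using s(1) Wprod by blast
  show ?thesis
  proof (cases "a = mat 1 \<or> b = mat 1")
    case True
    then show ?thesis using ab by auto
  next
    case False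
    obtain b0 f where f: "b0 \<noteq> 0" "\<And>x. \<sigma> *v x = x + f x *s b0"
      using refl_form[OF s(2)] by blast
    obtain s1 where s1: "s1 \<in> S1" "a *v s1 \<noteq> s1" using W1_nonid ab(1) False by blast
    obtain s2 where s2: "s2 \<in> S2" "b *v s2 \<noteq> s2" using W2_nonid ab(2) False by blast
    have "\<sigma> *v s1 = a *v s1" using ab act2 s1(1) by (simp add: matrix_vector_mul_assoc[symmetric])
    then have "s1 + f s1 *s b0 = a *v s1" using f(2)[of s1] by simp
    then have p: "f s1 *s b0 = a *v s1 - s1" by (metis add_diff_cancel_left')
    have pS: "f s1 *s b0 \<in> S1" unfolding p using act1 ab(1) s1(1) sat_diff[OF sat1] by blast
    have pnz: "f s1 *s b0 \<noteq> 0" unfolding p using s1(2) by simp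
    have bs2: "b *v s2 \<in> S2" using act2 ab(2) s2(1) by blast
    have "\<sigma> *v s2 = b *v s2" using ab act1 bs2 by (simp add: matrix_vector_mul_assoc[symmetric])
    then have "s2 + f s2 *s b0 = b *v s2" using f(2)[of s2] by simp
    then have q: "f s2 *s b0 = b *v s2 - s2" by (metis add_diff_cancel_left')
    have qS: "f s2 *s b0 \<in> S2" unfolding q using bs2 s2(1) sat_diff[OF sat2] by blast
    have qnz: "f s2 *s b0 \<noteq> 0" unfolding q using s2(2) by simp
    have "f s2 *s (f s1 *s b0) = f s1 *s (f s2 *s b0)" by (simp add: vector_smult_assoc mult.commute)
    moreover have "f s2 *s (f s1 *s b0) \<in> S1" using pS sat_scale[OF sat1] by blast
    moreover have "f s1 *s (f s2 *s b0) \<in> S2" using qS sat_scale[OF sat2] by blast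
    ultimately have "f s2 *s (f s1 *s b0) \<in> S1 \<inter> S2" by simp
    then have "f s2 *s (f s1 *s b0) = 0" using int12 by simp
    then have "f s2 = 0 \<or> f s1 *s b0 = 0" using vec_scale_zero by blast
    then show ?thesis using pnz qnz by auto
  qed
qed

lemma mgen_W1:
  assumes R: "R \<subseteq> W1"
  shows "mgen R \<subseteq> W1"
proof
  fix x assume "x \<in> mgen R"
  then show "x \<in> W1"
  proof (induction rule: mgen.induct)
    case mgen_one
    show ?case by (rule one1)
  next
    case (mgen_mult a b)
    then show ?case using R cl1 by blast
  qed
qed

lemma uniq_prod:
  assumes "a \<in> W1" "a' \<in> W1" "b \<in> W2" "b' \<in> W2" "a ** b = a' ** b'"
  shows "a = a'"
proof (rule agree)
  fix s assume s: "s \<in> S1"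
  have "a *v s = (a ** b) *v s" using assms(3) act2 s by (simp add: matrix_vector_mul_assoc[symmetric])
  also have "\<dots> = (a' ** b') *v s" using assms(5) by simp
  also have "\<dots> = a' *v s" using assms(4) act2 s by (simp add: matrix_vector_mul_assoc[symmetric])
  finally show "a *v s = a' *v s" .
next
  fix s assume "s \<in> S2"
  then show "a *v s = a' *v s" using assms(1,2) act1 by simp
qed

lemma W1_gen: "W1 = mgen {\<sigma>\<in>W1. is_reflection \<sigma>}"
proof
  let ?R1 = "{\<sigma>\<in>W1. is_reflection \<sigma>}"
  show "mgen ?R1 \<subseteq> W1" by (rule mgen_W1) blast
  have Wgen: "W = mgen {\<sigma>\<in>W. is_reflection \<sigma>}" using crl unfolding is_crl_def by (elim conjE) assumption
  have fact: "\<exists>g1\<in>mgen ?R1. \<exists>g2\<in>W2. w = g1 ** g2" if "w \<in> mgen {\<sigma>\<in>W. is_reflection \<sigma>}" for w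
    using that
  proof (induction rule: mgen.induct)
    case mgen_one
    have "mat 1 = mat 1 ** (mat 1 :: z2^'n^'n)" by simp
    then show ?case using one2 mgen.mgen_one[of ?R1] by blast
  next
    case (mgen_mult a b)
    then obtain g1 g2 where g: "g1 \<in> mgen ?R1" "g2 \<in> W2" "b = g1 ** g2" by blast
    have g1W: "g1 \<in> W1" using g(1) mgen_W1[of ?R1] by blast
    have aW: "a \<in> W" and ar: "is_reflection a" using mgen_mult.hyps(1) by auto
    have "a \<in> W1 \<or> a \<in> W2" by (rule refl_split[OF aW ar])
    then show ?case
    proof
      assume a1: "a \<in> W1"
      then have "a \<in> ?R1" using ar by simp
      then have "a ** g1 \<in> mgen ?R1" using g(1) by (rule mgen.mgen_mult)
      moreover have "a ** b = (a ** g1) ** g2" by (simp add: g(3) matrix_mul_assoc)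
      ultimately show ?thesis using g(2) by blast
    next
      assume a2: "a \<in> W2"
      have "a ** b = (a ** g1) ** g2" by (simp add: g(3) matrix_mul_assoc)
      also have "\<dots> = (g1 ** a) ** g2" using comm g1W a2 by simp
      also have "\<dots> = g1 ** (a ** g2)" by (simp add: matrix_mul_assoc)
      finally show ?thesis using g(1) cl2 a2 g(2) by blast
    qed
  qed
  show "W1 \<subseteq> mgen ?R1"
  proof
    fix w assume w: "w \<in> W1"
    then have "w \<in> mgen {\<sigma>\<in>W. is_reflection \<sigma>}" using W1sub Wgen by blast
    then obtain g1 g2 where g: "g1 \<in> mgen ?R1" "g2 \<in> W2" "w = g1 ** g2" using fact by blast
    have "g1 \<in> W1" using g(1) mgen_W1[of ?R1] by blast
    have "g1 ** g2 = w ** mat 1" using g(3) by simp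
    then have "g1 = w" using uniq_prod[OF \<open>g1 \<in> W1\<close> w g(2) one2] by blast
    then show "w \<in> mgen ?R1" using g(1) by simp
  qed
qed

lemma psi_refl:
  assumes t: "\<tau> \<in> WD" "is_reflection \<tau>"
  shows "is_reflection (\<psi> \<tau>)"
proof -
  obtain b f where bf: "b \<noteq> 0" "\<And>y. \<tau> *v y = y + f y *s b" "f b = -2"
    using refl_form[OF t(2)] by blast
  have "\<forall>a\<in>W. lat_aut a" using crl unfolding is_crl_def by (elim conjE) assumption
  then have lat: "lat_aut (\<psi> \<tau>)" using psi_in[OF t(1)] W2sub by blast
  have Gb: "G *v b \<noteq> 0"
  proof
    assume "G *v b = 0"
    then have "G *v b = G *v 0" by simp
    then show False using G_inj bf(1) by blast
  qed
  show ?thesis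
  proof (rule refl_from_form[OF lat Gb])
    fix x
    have "\<psi> \<tau> *v x = \<psi> \<tau> *v lat_proj1 S1 S2 x + \<psi> \<tau> *v (G *v H x)"
      by (subst x_split[of x]) (simp add: mv_add)
    also have "\<psi> \<tau> *v lat_proj1 S1 S2 x = lat_proj1 S1 S2 x" using act2 psi_in[OF t(1)] pr1(1) by blast
    also have "\<psi> \<tau> *v (G *v H x) = G *v (\<tau> *v H x)" by (rule G_int_v[OF t(1)])
    also have "\<dots> = G *v H x + f (H x) *s (G *v b)" by (simp add: bf(2) mv_add mv_scale)
    finally show "\<psi> \<tau> *v x = x + f (H x) *s (G *v b)"
      using x_split[of x] by (simp add: algebra_simps)
  next
    show "f (H (G *v b)) = -2" using bf(3) by (simp add: HG)
  qed
qed

end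

lemma unit_inv: "z2_unit u \<Longrightarrow> \<exists>v. z2_unit v \<and> v * u = 1"
  unfolding z2_unit_def by (metis mult.commute)

context L77
begin

lemma THE_H: "(THE y. G *v y = x - lat_proj1 S1 S2 x) = H x"
  by (simp add: H_def)

lemma GH_S2: "b \<in> S2 \<Longrightarrow> G *v H b = b"
  by (simp add: GH pr1_S2)

lemma refl_nonid: "is_reflection \<sigma> \<Longrightarrow> \<exists>x. \<sigma> *v x \<noteq> x"
proof -
  assume "is_reflection \<sigma>"
  then obtain b f where bf: "b \<noteq> 0" "\<And>x. \<sigma> *v x = x + f x *s b" "f b = -2"
    using refl_form by blast
  have "\<sigma> *v b \<noteq> b"
  proof
    assume "\<sigma> *v b = b"
    then have "(-2) *s b = 0" using bf(2)[of b] bf(3) by simp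
    then have "(-2::z2) = 0 \<or> b = 0" by (rule vec_scale_zero)
    then show False using bf(1) z2_two_nz by simp
  qed
  then show ?thesis by blast
qed

lemma mark_basic:
  assumes "is_marking_on UNIV \<sigma> b \<beta>" "is_reflection \<sigma>"
  shows "\<And>x. \<sigma> *v x = x + \<beta> x *s b" "\<And>x y. \<beta> (x + y) = \<beta> x + \<beta> y" "\<And>c x. \<beta> (c *s x) = c * \<beta> x"
    "b \<noteq> 0" "\<exists>x. \<beta> x \<noteq> 0"
proof -
  show f: "\<And>x. \<sigma> *v x = x + \<beta> x *s b" using assms(1) unfolding is_marking_on_def by blast
  show "\<And>x y. \<beta> (x + y) = \<beta> x + \<beta> y" "\<And>c x. \<beta> (c *s x) = c * \<beta> x"
    using assms(1) unfolding is_marking_on_def lin_on_def by blast+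
  obtain x where "\<sigma> *v x \<noteq> x" using refl_nonid[OF assms(2)] by blast
  then have "\<beta> x *s b \<noteq> 0" using f[of x] by auto
  then show "b \<noteq> 0" "\<exists>x. \<beta> x \<noteq> 0" by auto
qed

lemma mark_W1:
  assumes s: "\<sigma> \<in> W1" "is_reflection \<sigma>" and mk: "is_marking_on UNIV \<sigma> b \<beta>"
  shows "b \<in> S1" "\<And>x. x \<in> S2 \<Longrightarrow> \<beta> x = 0"
proof -
  note mb = mark_basic[OF mk s(2)]
  show z: "\<beta> x = 0" if x: "x \<in> S2" for x
  proof -
    have "\<sigma> *v x = x" using act1 s(1) x by blast
    then have "\<beta> x *s b = 0" using mb(1)[of x] by simp
    then show ?thesis using mb(4) vec_scale_zero by blast
  qed
  obtain x0 where x0: "\<beta> x0 \<noteq> 0" using mb(5) by blast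
  define p where "p = lat_proj1 S1 S2 x0"
  have p: "p \<in> S1" using pr1(1) by (simp add: p_def)
  have "\<beta> x0 = \<beta> p + \<beta> (G *v H x0)" using x_split[of x0] mb(2) by (metis p_def)
  then have bp: "\<beta> p = \<beta> x0" using z[OF G_in] by simp
  have "\<beta> p *s b = \<sigma> *v p - p" using mb(1)[of p] by simp
  then have "\<beta> p *s b \<in> S1" using act1 s(1) p sat_diff[OF sat1] by metis
  then show "b \<in> S1" using sat_cancel[OF sat1] x0 bp by metis
qed

lemma mark_W2:
  assumes s: "\<sigma> \<in> W2" "is_reflection \<sigma>" and mk: "is_marking_on UNIV \<sigma> b \<beta>"
  shows "b \<in> S2" "\<And>x. x \<in> S1 \<Longrightarrow> \<beta> x = 0"
proof -
  note mb = mark_basic[OF mk s(2)]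
  show z: "\<beta> x = 0" if x: "x \<in> S1" for x
  proof -
    have "\<sigma> *v x = x" using act2 s(1) x by blast
    then have "\<beta> x *s b = 0" using mb(1)[of x] by simp
    then show ?thesis using mb(4) vec_scale_zero by blast
  qed
  obtain x0 where x0: "\<beta> x0 \<noteq> 0" using mb(5) by blast
  define q where "q = G *v H x0"
  have q: "q \<in> S2" by (simp add: q_def G_in)
  have "\<beta> x0 = \<beta> (lat_proj1 S1 S2 x0) + \<beta> q" using x_split[of x0] mb(2) by (metis q_def)
  then have bq: "\<beta> q = \<beta> x0" using z[OF pr1(1)] by simp
  have "\<beta> q *s b = \<sigma> *v q - q" using mb(1)[of q] by simp
  then have "\<beta> q *s b \<in> S2" using act2 s(1) q sat_diff[OF sat2] by metis
  then show "b \<in> S2" using sat_cancel[OF sat2] x0 bq by metis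
qed

lemma m1_marked:
  assumes mm: "marked_on UNIV W m"
  shows "marked_on S1 W1 m"
proof -
  have mk: "\<And>\<sigma>. \<sigma> \<in> W \<Longrightarrow> is_reflection \<sigma> \<Longrightarrow> is_marking_on UNIV \<sigma> (fst (m \<sigma>)) (snd (m \<sigma>))"
    using mm unfolding marked_on_def by blast
  have cp: "\<And>w \<sigma> \<sigma>'. w \<in> W \<Longrightarrow> \<sigma> \<in> W \<Longrightarrow> \<sigma>' \<in> W \<Longrightarrow> is_reflection \<sigma> \<Longrightarrow> \<sigma>' ** w = w ** \<sigma> \<Longrightarrow>
        (\<exists>u. z2_unit u \<and> fst (m \<sigma>') = u *s (w *v fst (m \<sigma>)) \<and>
             (\<forall>x. snd (m \<sigma>) x = u * snd (m \<sigma>') (w *v x)))"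
    using mm unfolding marked_on_def by blast
  show ?thesis
    unfolding marked_on_def
  proof (intro conjI ballI impI)
    fix \<sigma> assume s: "\<sigma> \<in> W1" "is_reflection \<sigma>"
    have mk1: "is_marking_on UNIV \<sigma> (fst (m \<sigma>)) (snd (m \<sigma>))" using mk s W1sub by blast
    note mb = mark_basic[OF mk1 s(2)]
    have "fst (m \<sigma>) \<in> S1" using mark_W1[OF s mk1] by blast
    then show "is_marking_on S1 \<sigma> (fst (m \<sigma>)) (snd (m \<sigma>))"
      unfolding is_marking_on_def lin_on_def using mb(1,2,3) by blast
  next
    fix w \<sigma> \<sigma>' assume "w \<in> W1" "\<sigma> \<in> W1" "\<sigma>' \<in> W1" "is_reflection \<sigma> \<and> \<sigma>' ** w = w ** \<sigma>"
    then obtain u where "z2_unit u \<and> fst (m \<sigma>') = u *s (w *v fst (m \<sigma>)) \<and>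
             (\<forall>x. snd (m \<sigma>) x = u * snd (m \<sigma>') (w *v x))" using cp W1sub by blast
    then show "\<exists>u. z2_unit u \<and> fst (m \<sigma>') = u *s (w *v fst (m \<sigma>)) \<and>
             (\<forall>x\<in>S1. snd (m \<sigma>) x = u * snd (m \<sigma>') (w *v x))" by blast
  qed
qed

definition m2 where "m2 m \<tau> = (H (fst (m (\<psi> \<tau>))), \<lambda>y. snd (m (\<psi> \<tau>)) (G *v y))"

lemma m2_marked:
  assumes mm: "marked_on UNIV W m"
  shows "marked_on UNIV WD (m2 m)"
proof -
  have mk: "\<And>\<sigma>. \<sigma> \<in> W \<Longrightarrow> is_reflection \<sigma> \<Longrightarrow> is_marking_on UNIV \<sigma> (fst (m \<sigma>)) (snd (m \<sigma>))"
    using mm unfolding marked_on_def by blast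
  have cp: "\<And>w \<sigma> \<sigma>'. w \<in> W \<Longrightarrow> \<sigma> \<in> W \<Longrightarrow> \<sigma>' \<in> W \<Longrightarrow> is_reflection \<sigma> \<Longrightarrow> \<sigma>' ** w = w ** \<sigma> \<Longrightarrow>
        (\<exists>u. z2_unit u \<and> fst (m \<sigma>') = u *s (w *v fst (m \<sigma>)) \<and>
             (\<forall>x. snd (m \<sigma>) x = u * snd (m \<sigma>') (w *v x)))"
    using mm unfolding marked_on_def by blast
  show ?thesis
    unfolding marked_on_def
  proof (intro conjI ballI impI)
    fix \<tau> assume t: "\<tau> \<in> WD" "is_reflection \<tau>"
    have s: "\<psi> \<tau> \<in> W2" "is_reflection (\<psi> \<tau>)" using psi_in[OF t(1)] psi_refl[OF t] by blast+
    have mk1: "is_marking_on UNIV (\<psi> \<tau>) (fst (m (\<psi> \<tau>))) (snd (m (\<psi> \<tau>)))" using mk s W2sub by blast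
    note mb = mark_basic[OF mk1 s(2)]
    define b where "b = fst (m (\<psi> \<tau>))"
    define \<beta> where "\<beta> = snd (m (\<psi> \<tau>))"
    have bS: "b \<in> S2" using mark_W2[OF s mk1] by (simp add: b_def)
    have Gb: "G *v H b = b" by (rule GH_S2[OF bS])
    have form: "\<tau> *v y = y + \<beta> (G *v y) *s H b" for y
    proof (rule G_inj)
      have "G *v (\<tau> *v y) = \<psi> \<tau> *v (G *v y)" by (simp add: G_int_v[OF t(1)])
      also have "\<dots> = G *v y + \<beta> (G *v y) *s b" using mb(1) by (simp add: \<beta>_def b_def)
      also have "\<dots> = G *v (y + \<beta> (G *v y) *s H b)" by (simp add: mv_add mv_scale Gb)
      finally show "G *v (\<tau> *v y) = G *v (y + \<beta> (G *v y) *s H b)" .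
    qed
    show "is_marking_on UNIV \<tau> (fst (m2 m \<tau>)) (snd (m2 m \<tau>))"
      unfolding is_marking_on_def lin_on_def m2_def fst_conv snd_conv
      using form mb(2,3) by (simp add: b_def \<beta>_def mv_add mv_scale)
  next
    fix w \<tau> \<tau>' assume w: "w \<in> WD" "\<tau> \<in> WD" "\<tau>' \<in> WD" "is_reflection \<tau> \<and> \<tau>' ** w = w ** \<tau>"
    have pw: "\<psi> w \<in> W" "\<psi> \<tau> \<in> W" "\<psi> \<tau>' \<in> W" using psi_in w W2sub by blast+
    have pr: "is_reflection (\<psi> \<tau>)" using psi_refl w by blast
    have "\<psi> \<tau>' ** \<psi> w = \<psi> w ** \<psi> \<tau>" using psihom w by metis
    then obtain u where u: "z2_unit u" "fst (m (\<psi> \<tau>')) = u *s (\<psi> w *v fst (m (\<psi> \<tau>)))"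
      "\<forall>x. snd (m (\<psi> \<tau>)) x = u * snd (m (\<psi> \<tau>')) (\<psi> w *v x)"
      using cp[OF pw pr] by blast
    have s: "\<psi> \<tau> \<in> W2" using psi_in w by blast
    have mk1: "is_marking_on UNIV (\<psi> \<tau>) (fst (m (\<psi> \<tau>))) (snd (m (\<psi> \<tau>)))" using mk pw pr by blast
    have bS: "fst (m (\<psi> \<tau>)) \<in> S2" using mark_W2[OF s pr mk1] by blast
    have "fst (m (\<psi> \<tau>')) = G *v (u *s (w *v H (fst (m (\<psi> \<tau>)))))"
      using u(2) by (simp add: mv_scale G_int_v[OF w(1), symmetric] GH_S2[OF bS])
    then have e1: "fst (m2 m \<tau>') = u *s (w *v fst (m2 m \<tau>))" by (simp add: m2_def HG)
    have e2: "\<forall>y. snd (m2 m \<tau>) y = u * snd (m2 m \<tau>') (w *v y)"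
      using u(3) by (simp add: m2_def G_int_v[OF w(1)])
    show "\<exists>u. z2_unit u \<and> fst (m2 m \<tau>') = u *s (w *v fst (m2 m \<tau>)) \<and>
             (\<forall>x\<in>UNIV. snd (m2 m \<tau>) x = u * snd (m2 m \<tau>') (w *v x))"
      using u(1) e1 e2 by blast
  qed
qed

lemma m_respected:
  assumes mm: "marked_on UNIV W m"
  shows "marks_respected S1 S2 G \<psi> W1 WD m m (m2 m)"
proof -
  have mk: "\<And>\<sigma>. \<sigma> \<in> W \<Longrightarrow> is_reflection \<sigma> \<Longrightarrow> is_marking_on UNIV \<sigma> (fst (m \<sigma>)) (snd (m \<sigma>))"
    using mm unfolding marked_on_def by blast
  have one: "z2_unit 1" by (simp add: z2_unit_def)
  show ?thesis
    unfolding marks_respected_def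
  proof (intro conjI ballI impI)
    fix \<sigma> assume s: "\<sigma> \<in> W1" "is_reflection \<sigma>"
    have mk1: "is_marking_on UNIV \<sigma> (fst (m \<sigma>)) (snd (m \<sigma>))" using mk s W1sub by blast
    note mb = mark_basic[OF mk1 s(2)]
    have z: "snd (m \<sigma>) (G *v H x) = 0" for x using mark_W1(2)[OF s mk1 G_in] .
    have "snd (m \<sigma>) (lat_proj1 S1 S2 x) = 1 * snd (m \<sigma>) x" for x
    proof -
      have "snd (m \<sigma>) x = snd (m \<sigma>) (lat_proj1 S1 S2 x) + snd (m \<sigma>) (G *v H x)"
        using x_split[of x] mb(2) by metis
      then show ?thesis using z by simp
    qed
    then show "mark_eq_on UNIV (fst (m \<sigma>), \<lambda>x. snd (m \<sigma>) (lat_proj1 S1 S2 x)) (m \<sigma>)"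
      unfolding mark_eq_on_def using one by (intro exI[of _ 1]) simp
  next
    fix \<tau> assume t: "\<tau> \<in> WD" "is_reflection \<tau>"
    have s: "\<psi> \<tau> \<in> W2" "is_reflection (\<psi> \<tau>)" using psi_in[OF t(1)] psi_refl[OF t] by blast+
    have mk1: "is_marking_on UNIV (\<psi> \<tau>) (fst (m (\<psi> \<tau>))) (snd (m (\<psi> \<tau>)))" using mk s W2sub by blast
    note mb = mark_basic[OF mk1 s(2)]
    have bS: "fst (m (\<psi> \<tau>)) \<in> S2" using mark_W2[OF s mk1] by blast
    have z: "snd (m (\<psi> \<tau>)) (lat_proj1 S1 S2 x) = 0" for x using mark_W2(2)[OF s mk1 pr1(1)] .
    have "snd (m (\<psi> \<tau>)) (G *v H x) = 1 * snd (m (\<psi> \<tau>)) x" for x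
    proof -
      have "snd (m (\<psi> \<tau>)) x = snd (m (\<psi> \<tau>)) (lat_proj1 S1 S2 x) + snd (m (\<psi> \<tau>)) (G *v H x)"
        using x_split[of x] mb(2) by metis
      then show ?thesis using z by simp
    qed
    then show "mark_eq_on UNIV (G *v fst (m2 m \<tau>),
        \<lambda>x. snd (m2 m \<tau>) (THE y. G *v y = x - lat_proj1 S1 S2 x)) (m (\<psi> \<tau>))"
      unfolding mark_eq_on_def m2_def fst_conv snd_conv THE_H GH_S2[OF bS]
      using one by (intro exI[of _ 1]) simp
  qed
qed

lemma m_unique:
  assumes mm: "marked_on UNIV W m"
    and r: "marks_respected S1 S2 G \<psi> W1 WD m m1' m2'"
  shows "(\<forall>\<sigma>\<in>W1. is_reflection \<sigma> \<longrightarrow> mark_eq_on S1 (m \<sigma>) (m1' \<sigma>)) \<and>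
         (\<forall>\<tau>\<in>WD. is_reflection \<tau> \<longrightarrow> mark_eq_on UNIV (m2 m \<tau>) (m2' \<tau>))"
proof (intro conjI ballI impI)
  have mk: "\<And>\<sigma>. \<sigma> \<in> W \<Longrightarrow> is_reflection \<sigma> \<Longrightarrow> is_marking_on UNIV \<sigma> (fst (m \<sigma>)) (snd (m \<sigma>))"
    using mm unfolding marked_on_def by blast
  fix \<sigma> assume s: "\<sigma> \<in> W1" "is_reflection \<sigma>"
  obtain u where u: "z2_unit u" "fst (m \<sigma>) = u *s fst (m1' \<sigma>)"
      "\<forall>x. snd (m1' \<sigma>) (lat_proj1 S1 S2 x) = u * snd (m \<sigma>) x"
    using r s unfolding marks_respected_def mark_eq_on_def by auto
  obtain v where v: "z2_unit v" "v * u = 1" using unit_inv[OF u(1)] by blast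
  have "fst (m1' \<sigma>) = v *s fst (m \<sigma>)"
    using u(2) v(2) by (simp add: vector_smult_assoc)
  moreover have "snd (m \<sigma>) x = v * snd (m1' \<sigma>) x" if x: "x \<in> S1" for x
  proof -
    have "snd (m1' \<sigma>) x = u * snd (m \<sigma>) x" using u(3) pr1_S1[OF x] by metis
    then have "v * snd (m1' \<sigma>) x = (v * u) * snd (m \<sigma>) x" by (simp add: mult.assoc)
    then show ?thesis using v(2) by simp
  qed
  ultimately show "mark_eq_on S1 (m \<sigma>) (m1' \<sigma>)" unfolding mark_eq_on_def using v(1) by blast
next
  fix \<tau> assume t: "\<tau> \<in> WD" "is_reflection \<tau>"
  have mk: "\<And>\<sigma>. \<sigma> \<in> W \<Longrightarrow> is_reflection \<sigma> \<Longrightarrow> is_marking_on UNIV \<sigma> (fst (m \<sigma>)) (snd (m \<sigma>))"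
    using mm unfolding marked_on_def by blast
  obtain u where u: "z2_unit u" "fst (m (\<psi> \<tau>)) = u *s (G *v fst (m2' \<tau>))"
      "\<forall>x. snd (m2' \<tau>) (THE y. G *v y = x - lat_proj1 S1 S2 x) = u * snd (m (\<psi> \<tau>)) x"
    using r t unfolding marks_respected_def mark_eq_on_def by auto
  obtain v where v: "z2_unit v" "v * u = 1" using unit_inv[OF u(1)] by blast
  have "H (fst (m (\<psi> \<tau>))) = u *s fst (m2' \<tau>)"
    using u(2) by (simp add: mv_scale[symmetric] HG)
  then have "fst (m2' \<tau>) = v *s fst (m2 m \<tau>)"
    using v(2) by (simp add: m2_def vector_smult_assoc)
  moreover have "snd (m2 m \<tau>) y = v * snd (m2' \<tau>) y" for y
  proof -
    have "snd (m2' \<tau>) y = u * snd (m (\<psi> \<tau>)) (G *v y)"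
      using u(3)[rule_format, of "G *v y"] by (simp add: THE_H HG)
    then have "v * snd (m2' \<tau>) y = (v * u) * snd (m (\<psi> \<tau>)) (G *v y)" by (simp add: mult.assoc)
    then show ?thesis using v(2) by (simp add: m2_def)
  qed
  ultimately show "mark_eq_on UNIV (m2 m \<tau>) (m2' \<tau>)" unfolding mark_eq_on_def using v(1) by blast
qed

lemma main_ex:
  "\<exists>(G :: z2^3^'n) \<psi>.
       bij_betw ((*v) G) UNIV S2 \<and> bij_betw \<psi> WD W2 \<and>
       (\<forall>a\<in>WD. \<forall>b\<in>WD. \<psi> (a ** b) = \<psi> a ** \<psi> b) \<and>
       (\<forall>u\<in>WD. \<psi> u ** G = G ** u) \<and>
       (\<forall>m. marked_on UNIV W m \<longrightarrow>
          (\<exists>m1 m2. marked_on S1 W1 m1 \<and> marked_on UNIV WD m2 \<and>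
             marks_respected S1 S2 G \<psi> W1 WD m m1 m2 \<and>
             (\<forall>m1' m2'. marked_on S1 W1 m1' \<and> marked_on UNIV WD m2' \<and>
                 marks_respected S1 S2 G \<psi> W1 WD m m1' m2' \<longrightarrow>
                (\<forall>\<sigma>\<in>W1. is_reflection \<sigma> \<longrightarrow> mark_eq_on S1 (m1 \<sigma>) (m1' \<sigma>)) \<and>
                (\<forall>\<tau>\<in>WD. is_reflection \<tau> \<longrightarrow> mark_eq_on UNIV (m2 \<tau>) (m2' \<tau>)))))"
proof (intro exI[of _ G] exI[of _ \<psi>] conjI allI impI ballI)
  show "bij_betw ((*v) G) UNIV S2" by (rule G_bij)
  show "bij_betw \<psi> WD W2" by (rule psibij)
  show "\<psi> (a ** b) = \<psi> a ** \<psi> b" if "a \<in> WD" "b \<in> WD" for a b using psihom that by blast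
  show "\<psi> u ** G = G ** u" if "u \<in> WD" for u using G_int that by blast
  fix m assume mm: "marked_on UNIV W m"
  show "\<exists>m1 m2. marked_on S1 W1 m1 \<and> marked_on UNIV WD m2 \<and>
             marks_respected S1 S2 G \<psi> W1 WD m m1 m2 \<and>
             (\<forall>m1' m2'. marked_on S1 W1 m1' \<and> marked_on UNIV WD m2' \<and>
                 marks_respected S1 S2 G \<psi> W1 WD m m1' m2' \<longrightarrow>
                (\<forall>\<sigma>\<in>W1. is_reflection \<sigma> \<longrightarrow> mark_eq_on S1 (m1 \<sigma>) (m1' \<sigma>)) \<and>
                (\<forall>\<tau>\<in>WD. is_reflection \<tau> \<longrightarrow> mark_eq_on UNIV (m2 \<tau>) (m2' \<tau>)))"
    using m1_marked[OF mm] m2_marked[OF mm] m_respected[OF mm] m_unique[OF mm] by blast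
qed

end

theorem lemma7p7:
  fixes W :: "(z2^'n^'n) set" and WD :: "(z2^3^3) set"
    and S1 S2 :: "(z2^'n) set" and W1 W2 :: "(z2^'n^'n) set"
  assumes "is_crl W"
    and "DI4_like WD"
    and "rat_decomp W S1 S2 W1 W2"
    and "rat_iso WD S2 W2"
  shows "(\<forall>x. \<exists>a\<in>S1. \<exists>b\<in>S2. x = a + b) \<and>
    W1 = mgen {\<sigma>\<in>W1. is_reflection \<sigma>} \<and>
    (\<exists>(G :: z2^3^'n) \<psi>.
       bij_betw ((*v) G) UNIV S2 \<and> bij_betw \<psi> WD W2 \<and>
       (\<forall>a\<in>WD. \<forall>b\<in>WD. \<psi> (a ** b) = \<psi> a ** \<psi> b) \<and>
       (\<forall>u\<in>WD. \<psi> u ** G = G ** u) \<and>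
       (\<forall>m. marked_on UNIV W m \<longrightarrow>
          (\<exists>m1 m2. marked_on S1 W1 m1 \<and> marked_on UNIV WD m2 \<and>
             marks_respected S1 S2 G \<psi> W1 WD m m1 m2 \<and>
             (\<forall>m1' m2'. marked_on S1 W1 m1' \<and> marked_on UNIV WD m2' \<and>
                 marks_respected S1 S2 G \<psi> W1 WD m m1' m2' \<longrightarrow>
                (\<forall>\<sigma>\<in>W1. is_reflection \<sigma> \<longrightarrow> mark_eq_on S1 (m1 \<sigma>) (m1' \<sigma>)) \<and>
                (\<forall>\<tau>\<in>WD. is_reflection \<tau> \<longrightarrow> mark_eq_on UNIV (m2 \<tau>) (m2' \<tau>))))))"
proof -
  obtain F :: "z2^3^'n" and \<psi> where F: "inj ((*v) F)" "range ((*v) F) \<subseteq> S2"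
      "\<forall>x\<in>S2. \<exists>c. c \<noteq> 0 \<and> c *s x \<in> range ((*v) F)"
      "bij_betw \<psi> WD W2" "\<forall>a\<in>WD. \<forall>b\<in>WD. \<psi> (a ** b) = \<psi> a ** \<psi> b"
      "\<forall>u\<in>WD. \<psi> u ** F = F ** u"
    using assms(4) unfolding rat_iso_def by blast
  interpret L: L77 W WD S1 S2 W1 W2 F \<psi>
    using assms(1,2,3) F by (unfold_locales) auto
  show ?thesis using L.dec_ex L.W1_gen L.main_ex by blast
qed

end
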